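(* Let the standing assumptions hold (with $\mu\ge0$), let $\alpha\in(0,2/L)$ and $p\in(0,1]$, and let $(\bm{x}^\star,\bm{w}^\star,\bm{u}_b^\star)$ satisfy $\bm{w}^\star=\bm{x}^\star-\alpha\nabla F(\bm{x}^\star)$, $\bm{x}^\star=\mathrm{prox}_{\alpha R}(\bm{A}(\bm{w}^\star-\sqrt{\bm{B}}\bm{u}_b^\star))$, $\bm{0}=\sqrt{\bm{B}}(\bm{w}^\star-\sqrt{\bm{B}}\bm{u}_b^\star)$, with $\bm{u}_b^\star\in\mathrm{range}(\sqrt{\bm{B}})$. Then for the iterates of the algorithm below, $\|\nabla F(\bm{x}^k)-\nabla F(\bm{x}^\star)\|^2\to0$ and $\|\bm{u}^k-\bm{u}_b^\star\|^2\to0$ as $k\to\infty$, both almost surely and in quadratic mean. Moreover, with $\bar{\bm X}^K=\frac1K\sum_{k=0}^{K-1}\bm x^k$ and $\bar{\bm U}^K=\frac1K\sum_{k=0}^{K-1}\bm u^k$, there is a constant $C$ independent of $K$ (depending on $\alpha,L,p,B,\bm x^0,\bm x^\star,\bm u_b^\star$) such that $$\mathbb{E}\Big[\|\nabla F(\bar{\bm X}^K)-\nabla F(\bm x^\star)\|^2+\|\bar{\bm U}^K-\bm u_b^\star\|^2\Big]\le \frac{C}{K}\quad\text{for all }K\ge1.$$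
   Context: Standing assumptions: $f_1,\dots,f_n:\mathbb{R}^d\to\mathbb{R}$ are $\mu$-strongly convex with $\mu\ge0$ and $L$-smooth ($L>0$); $r:\mathbb{R}^d\to\mathbb{R}\cup\{\infty\}$ is proper, closed, convex. For $\bm{x}=\mathrm{col}\{x_1,\dots,x_n\}\in\mathbb{R}^{nd}$, $F(\bm{x})=\sum_i f_i(x_i)$, $R(\bm{x})=\sum_i r(x_i)$, $\mathrm{prox}_{\alpha r}(x)=\arg\min_s\{r(s)+\frac1{2\alpha}\|s-x\|^2\}$ and $\mathrm{prox}_{\alpha R}$ acts blockwise. $W\in\mathbb{R}^{n\times n}$ is symmetric, $W\bm1=\bm1$, $W_{ij}>0$ on edges of an undirected connected graph and $W_{ij}=0$ for non-adjacent $i\ne j$. $A,B$ are polynomials in $W$ with $A^{\sf T}=A$, $A\bm1=\bm1$, $B\succeq0$, $\mathrm{null}(B)=\mathrm{span}(\bm1)$, $I-A^2-B\succeq0$; $\bm A=A\otimes I_d$, $\bm B=B\otimes I_d$, $\sqrt{\bm B}=\sqrt B\otimes I_d$ (PSD square root). Algorithm (FlexATC, equivalent form): $\theta_0,\theta_1,\dots$ are i.i.d. in $\{0,1\}$ with $\mathrm{Prob}(\theta_k=1)=p$; $\bm{A}_k=\theta_k\bm{A}+(1-\theta_k)\bm{I}$ and $\sqrt{\bm{B}_k}=\theta_k\sqrt{\bm B}$. Given $\bm{x}^0\in\mathbb{R}^{nd}$ and $\bm{u}^0=\bm 0$, for $k\ge0$: $\bm{w}^k=\bm{x}^k-\alpha\nabla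 F(\bm{x}^k)$, $\bm{x}^{k+1}=\mathrm{prox}_{\alpha R}\big(\bm{A}_k(\bm{w}^k-\sqrt{\bm B}\bm{u}^k)\big)$, $\bm{u}^{k+1}=\bm{u}^k+p\sqrt{\bm B_k}(\bm w^k-\sqrt{\bm B}\bm u^k)$. *)

theory Defs
  imports "HOL-Probability.Probability" "HOL-Computational_Algebra.Polynomial"
begin

(* Agents are indexed by a finite type 'n (n = CARD('n)); local variables live in a
   Euclidean space 'v (= R^d).  A stacked vector col{x_1,...,x_n} in R^{nd} is an
   element of ('v)^'n; its norm is sqrt(sum_i |x_i|^2), i.e. the Euclidean norm of R^{nd}. *)

primrec matpow :: "real^'n^'n \<Rightarrow> nat \<Rightarrow> real^'n^'n" where
  "matpow W 0 = mat 1"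
| "matpow W (Suc k) = W ** matpow W k"

definition mat_poly :: "real poly \<Rightarrow> real^'n^'n \<Rightarrow> real^'n^'n" where
  "mat_poly q W = (\<Sum>k\<le>degree q. coeff q k *\<^sub>R matpow W k)"

definition is_poly_in :: "real^'n^'n \<Rightarrow> real^'n^'n \<Rightarrow> bool" where
  "is_poly_in A W \<longleftrightarrow> (\<exists>q. A = mat_poly q W)"

definition psd :: "real^'n^'n \<Rightarrow> bool" where
  "psd M \<longleftrightarrow> (\<forall>v. 0 \<le> v \<bullet> (M *v v))"

(* Kronecker action (M \<otimes> I_d) on stacked vectors *)
definition kron :: "real^'n^'n \<Rightarrow> 'v::real_vector^'n \<Rightarrow> 'v^'n" where
  "kron M x = (\<chi> i. \<Sum>j\<in>UNIV. (M $ i $ j) *\<^sub>R (x $ j))"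

definition strongly_convex :: "real \<Rightarrow> ('v::real_normed_vector \<Rightarrow> real) \<Rightarrow> bool" where
  "strongly_convex mu f \<longleftrightarrow>
     (\<forall>x y t. 0 \<le> t \<and> t \<le> 1 \<longrightarrow>
        f (t *\<^sub>R x + (1 - t) *\<^sub>R y) \<le> t * f x + (1 - t) * f y - mu / 2 * t * (1 - t) * norm (x - y)^2)"

definition is_gradient :: "('v::real_inner \<Rightarrow> real) \<Rightarrow> ('v \<Rightarrow> 'v) \<Rightarrow> bool" where
  "is_gradient f g \<longleftrightarrow> (\<forall>x. (f has_derivative (\<lambda>h. g x \<bullet> h)) (at x))"

definition smooth :: "real \<Rightarrow> ('v::real_inner \<Rightarrow> real) \<Rightarrow> ('v \<Rightarrow> 'v) \<Rightarrow> bool" where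
  "smooth L f g \<longleftrightarrow> is_gradient f g \<and> (\<forall>x y. norm (g x - g y) \<le> L * norm (x - y))"

definition ext_proper :: "('v \<Rightarrow> ereal) \<Rightarrow> bool" where
  "ext_proper r \<longleftrightarrow> (\<forall>x. r x \<noteq> -\<infinity>) \<and> (\<exists>x. r x < \<infinity>)"

definition ext_closed :: "('v::topological_space \<Rightarrow> ereal) \<Rightarrow> bool" where
  "ext_closed r \<longleftrightarrow> closed {(x, y::real). r x \<le> ereal y}"

definition ext_convex :: "('v::real_vector \<Rightarrow> ereal) \<Rightarrow> bool" where
  "ext_convex r \<longleftrightarrow> (\<forall>x y t. 0 \<le> t \<and> t \<le> 1 \<longrightarrow>
      r (t *\<^sub>R x + (1 - t) *\<^sub>R y) \<le> ereal t * r x + ereal (1 - t) * r y)"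

definition prox :: "real \<Rightarrow> ('v::real_normed_vector \<Rightarrow> ereal) \<Rightarrow> 'v \<Rightarrow> 'v" where
  "prox a r x = (SOME s. \<forall>t. r s + ereal (norm (s - x)^2 / (2 * a))
                               \<le> r t + ereal (norm (t - x)^2 / (2 * a)))"

definition gradF :: "('n \<Rightarrow> 'v \<Rightarrow> 'v) \<Rightarrow> 'v^'n \<Rightarrow> 'v^'n" where
  "gradF g x = (\<chi> i. g i (x $ i))"

definition proxR :: "real \<Rightarrow> ('v::real_normed_vector \<Rightarrow> ereal) \<Rightarrow> 'v^'n \<Rightarrow> 'v^'n" where
  "proxR a r x = (\<chi> i. prox a r (x $ i))"

(* FlexATC iterates (x^k, u^k) driven by a coin sequence th (th k = theta_k = 1);
   S is the PSD square root of B. *)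
fun flexatc :: "real^'n^'n \<Rightarrow> real^'n^'n \<Rightarrow> real \<Rightarrow> real \<Rightarrow> ('n \<Rightarrow> 'v \<Rightarrow> 'v)
      \<Rightarrow> ('v::real_normed_vector \<Rightarrow> ereal) \<Rightarrow> 'v^'n \<Rightarrow> (nat \<Rightarrow> bool) \<Rightarrow> nat \<Rightarrow> ('v^'n) \<times> ('v^'n)" where
  "flexatc A S a p g r x0 th 0 = (x0, 0)"
| "flexatc A S a p g r x0 th (Suc k) =
     (let (x, u) = flexatc A S a p g r x0 th k;
          w = x - a *\<^sub>R gradF g x;
          z = w - kron S u;
          Ak = (if th k then A else mat 1);
          Sk = (if th k then S else 0)
      in (proxR a r (kron Ak z), u + p *\<^sub>R kron Sk z))"

end

theory Submission
  imports Defs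
begin


lemma epi_convex:
  fixes r :: "'v::euclidean_space \<Rightarrow> ereal"
  assumes "ext_convex r"
  shows "convex {(x, y::real). r x \<le> ereal y}"
  unfolding convex_def
proof (intro ballI allI impI)
  fix p q :: "'v \<times> real" and u v :: real
  assume p: "p \<in> {(x, y). r x \<le> ereal y}" and q: "q \<in> {(x, y). r x \<le> ereal y}"
    and u0: "0 \<le> u" and v0: "0 \<le> v" and uv1: "u + v = 1"
  obtain x1 y1 where p': "p = (x1, y1)" by force
  obtain x2 y2 where q': "q = (x2, y2)" by force
  have r1: "r x1 \<le> ereal y1" using p p' by auto
  have r2: "r x2 \<le> ereal y2" using q q' by auto
  have v: "v = 1 - u" using uv1 by simp
  have uv: "0 \<le> u \<and> 0 \<le> v" using u0 v0 by simp
  have "r (u *\<^sub>R x1 + (1 - u) *\<^sub>R x2) \<le> ereal u * r x1 + ereal (1 - u) * r x2"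
    using assms uv v unfolding ext_convex_def by auto
  also have "\<dots> \<le> ereal u * ereal y1 + ereal (1 - u) * ereal y2"
    using uv v r1 r2 by (intro add_mono ereal_mult_left_mono) auto
  also have "\<dots> = ereal (u * y1 + (1 - u) * y2)" by simp
  finally show "u *\<^sub>R p + v *\<^sub>R q \<in> {(x, y). r x \<le> ereal y}"
    using p' q' v by simp
qed

lemma ext_minorant:
  fixes r :: "'v::euclidean_space \<Rightarrow> ereal"
  assumes pr: "ext_proper r" and cl: "ext_closed r" and cv: "ext_convex r"
  shows "\<exists>a c. \<forall>s. ereal (a \<bullet> s + c) \<le> r s"
proof -
  let ?E = "{(x, y::real). r x \<le> ereal y}"
  obtain s0 where s0: "r s0 < \<infinity>" using pr unfolding ext_proper_def by auto
  have "r s0 \<noteq> -\<infinity>" using pr unfolding ext_proper_def by auto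
  then obtain y0 where y0: "r s0 = ereal y0" using s0 by (cases "r s0") auto
  have nz: "(s0, y0 - 1) \<notin> ?E" using y0 by auto
  obtain a b where ab: "inner a (s0, y0 - 1) < b" "\<forall>z\<in>?E. inner a z > b"
    using separating_hyperplane_closed_point[OF epi_convex[OF cv] cl[unfolded ext_closed_def] nz]
    by blast
  obtain a1 a2 where a: "a = (a1, a2)" by force
  have "(s0, y0) \<in> ?E" using y0 by auto
  then have "b < a1 \<bullet> s0 + a2 * y0" using ab(2) a by auto
  moreover have "a1 \<bullet> s0 + a2 * (y0 - 1) < b" using ab(1) a by auto
  ultimately have a2: "a2 > 0" by (simp add: algebra_simps)
  have "ereal ((- a1 /\<^sub>R a2) \<bullet> s + b / a2) \<le> r s" for s
  proof (cases "r s")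
    case (real y)
    then have "(s, y) \<in> ?E" by auto
    then have "b < a1 \<bullet> s + a2 * y" using ab(2) a by auto
    then have "(- a1 /\<^sub>R a2) \<bullet> s + b / a2 < y" using a2
      by (simp add: field_simps inner_commute)
    then show ?thesis using real by simp
  next
    case PInf then show ?thesis by simp
  next
    case MInf then show ?thesis using pr unfolding ext_proper_def by auto
  qed
  then show ?thesis by blast
qed


lemma sublevel_closed:
  fixes r :: "'v::euclidean_space \<Rightarrow> ereal"
  assumes cl: "ext_closed r" and q: "continuous_on UNIV q"
  shows "closed {s. r s + ereal (q s) \<le> ereal \<beta>}"
proof -
  have eq: "{s. r s + ereal (q s) \<le> ereal \<beta>} = (\<lambda>s. (s, \<beta> - q s)) -` {(x, y::real). r x \<le> ereal y}"
  proof (rule set_eqI)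
    fix s show "s \<in> {s. r s + ereal (q s) \<le> ereal \<beta>} \<longleftrightarrow> s \<in> (\<lambda>s. (s, \<beta> - q s)) -` {(x, y). r x \<le> ereal y}"
      by (cases "r s") auto
  qed
  have "continuous (at s) (\<lambda>s. (s, \<beta> - q s))" for s
    using q by (intro continuous_intros) (auto simp: continuous_on_eq_continuous_at)
  then show ?thesis unfolding eq
    by (intro continuous_closed_vimage) (use cl in \<open>auto simp: ext_closed_def\<close>)
qed

lemma bound_aux:
  fixes d K0 na al :: real
  assumes "d\<^sup>2 / (2 * al) \<le> K0 + na * d" "0 < al" "0 \<le> d" "0 \<le> na"
  shows "d \<le> 1 + 2 * al * (\<bar>K0\<bar> + na)"
proof (cases "d \<le> 1")
  case True
  have "0 \<le> 2 * al * (\<bar>K0\<bar> + na)" using assms by simp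
  then show ?thesis using True by linarith
next
  case False
  have "d * d \<le> 2 * al * (K0 + na * d)" using assms
    by (simp add: power2_eq_square field_simps)
  also have "\<dots> \<le> 2 * al * ((\<bar>K0\<bar> + na) * d)"
  proof -
    have h: "\<bar>K0\<bar> \<le> \<bar>K0\<bar> * d" using False by (simp add: mult_le_cancel_left1)
    have "K0 + na * d \<le> (\<bar>K0\<bar> + na) * d" using h abs_ge_self[of K0] by (simp add: algebra_simps)
    then show ?thesis using assms by simp
  qed
  finally have "d * d \<le> (2 * al * (\<bar>K0\<bar> + na)) * d" by (simp add: algebra_simps)
  then have "d \<le> 2 * al * (\<bar>K0\<bar> + na)" using False by simp
  then show ?thesis by simp
qed

lemma prox_exists:
  fixes r :: "'v::euclidean_space \<Rightarrow> ereal"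
  assumes pr: "ext_proper r" and cl: "ext_closed r" and cv: "ext_convex r" and a: "0 < a"
  shows "\<exists>s. \<forall>t. r s + ereal (norm (s - x)^2 / (2 * a)) \<le> r t + ereal (norm (t - x)^2 / (2 * a))"
proof -
  define q where "q t = norm (t - x)^2 / (2 * a)" for t
  define \<phi> where "\<phi> t = r t + ereal (q t)" for t
  have qc: "continuous_on UNIV q" unfolding q_def using a by (intro continuous_intros) auto
  obtain av c where mino: "\<And>s. ereal (av \<bullet> s + c) \<le> r s" using ext_minorant[OF pr cl cv] by blast
  obtain s0 where s0: "r s0 < \<infinity>" using pr unfolding ext_proper_def by auto
  have "r s0 \<noteq> -\<infinity>" using pr unfolding ext_proper_def by auto
  then obtain y0 where y0: "r s0 = ereal y0" using s0 by (cases "r s0") auto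
  define c0 where "c0 = y0 + q s0"
  have phis0: "\<phi> s0 = ereal c0" unfolding \<phi>_def c0_def y0 by simp
  define K where "K = {s. \<phi> s \<le> ereal c0}"
  have Kcl: "closed K" unfolding K_def \<phi>_def by (rule sublevel_closed[OF cl qc])
  define R where "R = 1 + 2 * a * (\<bar>c0 - c - av \<bullet> x\<bar> + norm av)"
  have Kb: "norm (s - x) \<le> R" if "s \<in> K" for s
  proof -
    have "ereal (av \<bullet> s + c) + ereal (q s) \<le> \<phi> s" unfolding \<phi>_def by (intro add_mono mino) auto
    also have "\<dots> \<le> ereal c0" using that K_def by auto
    finally have 1: "av \<bullet> s + c + q s \<le> c0" by simp
    have "av \<bullet> (s - x) \<ge> - (norm av * norm (s - x))"
      using Cauchy_Schwarz_ineq2[of av "s - x"] by (simp add: abs_le_iff)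
    then have "norm (s - x)^2 / (2 * a) \<le> (c0 - c - av \<bullet> x) + norm av * norm (s - x)"
      using 1 unfolding q_def by (simp add: inner_diff_right)
    then show ?thesis unfolding R_def using a by (intro bound_aux) auto
  qed
  have Kbd: "bounded K"
  proof -
    have "K \<subseteq> cball x R" using Kb by (auto simp: dist_norm norm_minus_commute)
    then show ?thesis using bounded_cball bounded_subset by blast
  qed
  have Kc: "compact K" using Kcl Kbd compact_eq_bounded_closed by blast
  define T where "T = {t. \<phi> t \<le> ereal c0}"
  define F where "F = (\<lambda>t. {s. \<phi> s \<le> \<phi> t}) ` T"
  have fin: "\<exists>b. \<phi> t = ereal b" if "t \<in> T" for t
  proof -
    have "r t \<noteq> -\<infinity>" using pr unfolding ext_proper_def by auto
    moreover have "\<phi> t \<noteq> \<infinity>" using that T_def by auto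
    ultimately show ?thesis unfolding \<phi>_def by (cases "r t") auto
  qed
  have "K \<inter> \<Inter>F \<noteq> {}"
  proof (rule compact_imp_fip[OF Kc])
    fix U assume "U \<in> F"
    then obtain t where t: "t \<in> T" "U = {s. \<phi> s \<le> \<phi> t}" unfolding F_def by auto
    obtain b where b: "\<phi> t = ereal b" using fin[OF t(1)] by auto
    have "U = {s. \<phi> s \<le> ereal b}" using t b by simp
    then show "closed U" using sublevel_closed[OF cl qc, of b] unfolding \<phi>_def by simp
  next
    fix F' assume F': "finite F'" "F' \<subseteq> F"
    then obtain T' where T': "T' \<subseteq> T" "finite T'" "F' = (\<lambda>t. {s. \<phi> s \<le> \<phi> t}) ` T'"
      unfolding F_def by (meson finite_subset_image)
    show "K \<inter> \<Inter>F' \<noteq> {}"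
    proof (cases "T' = {}")
      case True
      have "s0 \<in> K" using phis0 K_def by auto
      then show ?thesis using True T' by auto
    next
      case False
      define m where "m = Min (\<phi> ` T')"
      have "m \<in> \<phi> ` T'" unfolding m_def using False T' by (intro Min_in) auto
      then obtain t0 where t0: "t0 \<in> T'" "\<phi> t0 = m" by auto
      have "\<phi> t0 \<le> \<phi> t" if "t \<in> T'" for t using t0 that T' unfolding m_def by auto
      moreover have "t0 \<in> K" using t0 T' unfolding K_def T_def by auto
      ultimately have "t0 \<in> K \<inter> \<Inter>F'" using T' by auto
      then show ?thesis by blast
    qed
  qed
  then obtain s where s: "s \<in> K" "\<And>U. U \<in> F \<Longrightarrow> s \<in> U" by blast
  have "\<phi> s \<le> \<phi> t" for t
  proof (cases "t \<in> T")
    case True then show ?thesis using s(2)[of "{s. \<phi> s \<le> \<phi> t}"] unfolding F_def by auto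
  next
    case False
    then have "ereal c0 < \<phi> t" unfolding T_def by auto
    moreover have "\<phi> s \<le> ereal c0" using s(1) K_def by auto
    ultimately show ?thesis by auto
  qed
  then show ?thesis unfolding \<phi>_def q_def by blast
qed


locale proxloc =
  fixes r :: "'v::euclidean_space \<Rightarrow> ereal" and a :: real
  assumes pr: "ext_proper r" and cl: "ext_closed r" and cv: "ext_convex r" and a: "0 < a"
begin

lemma prox_min: "r (prox a r x) + ereal (norm (prox a r x - x)^2 / (2 * a)) \<le> r t + ereal (norm (t - x)^2 / (2 * a))"
  using someI_ex[OF prox_exists[OF pr cl cv a, of x]] unfolding prox_def by blast

lemma prox_fin: "\<exists>ys. r (prox a r x) = ereal ys"
proof -
  obtain t where t: "r t < \<infinity>" using pr unfolding ext_proper_def by auto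
  have "r (prox a r x) + ereal (norm (prox a r x - x)^2 / (2 * a)) < \<infinity>"
    using prox_min[of x t] t by (cases "r t") auto
  moreover have "r (prox a r x) \<noteq> -\<infinity>" using pr unfolding ext_proper_def by auto
  ultimately show ?thesis by (cases "r (prox a r x)") auto
qed

lemma small_lemma:
  fixes A B C :: real
  assumes "\<And>l. 0 < l \<Longrightarrow> l \<le> 1 \<Longrightarrow> A \<le> B + l * C"
  shows "A \<le> B"
proof (rule ccontr)
  assume "\<not> A \<le> B"
  then have AB: "A > B" by simp
  have C: "C > 0"
  proof (rule ccontr)
    assume "\<not> C > 0"
    then show False using assms[of 1] AB by simp
  qed
  define l where "l = min 1 ((A - B) / (2 * C))"
  have l0: "0 < l" using AB C unfolding l_def by auto
  have "l * C \<le> (A - B) / (2 * C) * C" unfolding l_def using C by (intro mult_right_mono) auto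
  also have "\<dots> = (A - B) / 2" using C by simp
  finally have "l * C < A - B" using AB by simp
  then show False using assms[of l] l0 unfolding l_def by auto
qed

lemma alg1: "(a::real) > 0 \<Longrightarrow> (2*l*P + l^2*Q)/(2*a) = l*(P/a) + l*(l*(Q/(2*a)))"
  by (simp add: add_divide_distrib power2_eq_square)

lemma prox_var:
  assumes ys: "r (prox a r x) = ereal ys" and y: "r t = ereal y"
  shows "ys \<le> y + ((prox a r x) - x) \<bullet> (t - prox a r x) / a"
proof -
  define s where "s = prox a r x"
  have ys': "r s = ereal ys" using ys s_def by simp
  have "ys \<le> y + (s - x) \<bullet> (t - s) / a + l * (norm (t - s)^2 / (2 * a))" if l: "0 < l" "l \<le> 1" for l
  proof -
    define m where "m = l *\<^sub>R t + (1 - l) *\<^sub>R s"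
    have "r m \<le> ereal l * r t + ereal (1 - l) * r s"
      using cv l unfolding ext_convex_def m_def by auto
    also have "\<dots> = ereal (l * y + (1 - l) * ys)" using y ys' by simp
    finally have rm: "r m \<le> ereal (l * y + (1 - l) * ys)" .
    have "ereal ys + ereal (norm (s - x)^2 / (2 * a)) \<le> r m + ereal (norm (m - x)^2 / (2 * a))"
      using prox_min[of x m] ys' s_def by simp
    also have "\<dots> \<le> ereal (l * y + (1 - l) * ys) + ereal (norm (m - x)^2 / (2 * a))"
      using rm by (intro add_mono) auto
    finally have 1: "ys + norm (s - x)^2 / (2 * a) \<le> l * y + (1 - l) * ys + norm (m - x)^2 / (2 * a)"
      by simp
    have mx: "m - x = (s - x) + l *\<^sub>R (t - s)" unfolding m_def by (simp add: algebra_simps)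
    have "norm (m - x)^2 = norm (s - x)^2 + 2 * l * ((s - x) \<bullet> (t - s)) + l^2 * norm (t - s)^2"
      unfolding mx power2_norm_eq_inner by (simp add: inner_add_left inner_add_right inner_diff_left inner_diff_right inner_commute algebra_simps power2_eq_square)
    then have "norm (m - x)^2 / (2 * a) = norm (s - x)^2 / (2 * a) + (2 * l * ((s - x) \<bullet> (t - s)) + l^2 * norm (t - s)^2) / (2 * a)"
      by (simp add: add_divide_distrib)
    with 1 have "l * ys \<le> l * y + (2 * l * ((s - x) \<bullet> (t - s)) + l^2 * norm (t - s)^2) / (2 * a)"
      by (simp add: algebra_simps)
    moreover have "(2 * l * ((s - x) \<bullet> (t - s)) + l^2 * norm (t - s)^2) / (2 * a)
       = l * ((s - x) \<bullet> (t - s) / a) + l * (l * (norm (t - s)^2 / (2 * a)))"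
      by (rule alg1[OF a])
    moreover have "l * (y + (s - x) \<bullet> (t - s) / a + l * (norm (t - s)^2 / (2 * a)))
       = l * y + l * ((s - x) \<bullet> (t - s) / a) + l * (l * (norm (t - s)^2 / (2 * a)))"
      by (simp only: distrib_left)
    ultimately have "l * ys \<le> l * (y + (s - x) \<bullet> (t - s) / a + l * (norm (t - s)^2 / (2 * a)))"
      by linarith
    then show ?thesis using l by simp
  qed
  from small_lemma[OF this] have "ys \<le> y + (s - x) \<bullet> (t - s) / a" .
  then show ?thesis unfolding s_def .
qed

lemma prox_nonexp: "norm (prox a r x1 - prox a r x2) \<le> norm (x1 - x2)"
proof -
  define s1 where "s1 = prox a r x1"
  define s2 where "s2 = prox a r x2"
  obtain y1 where y1: "r s1 = ereal y1" using prox_fin s1_def by blast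
  obtain y2 where y2: "r s2 = ereal y2" using prox_fin s2_def by blast
  have 1: "y1 \<le> y2 + (s1 - x1) \<bullet> (s2 - s1) / a" using prox_var[of x1 y1 s2 y2] y1 y2 s1_def by simp
  have 2: "y2 \<le> y1 + (s2 - x2) \<bullet> (s1 - s2) / a" using prox_var[of x2 y2 s1 y1] y1 y2 s2_def by simp
  have "0 \<le> ((s1 - x1) \<bullet> (s2 - s1) + (s2 - x2) \<bullet> (s1 - s2)) / a" using 1 2 by (simp add: add_divide_distrib)
  then have 3: "0 \<le> (s1 - x1) \<bullet> (s2 - s1) + (s2 - x2) \<bullet> (s1 - s2)" using a by (simp add: zero_le_divide_iff)
  have "(s1 - x1) \<bullet> (s2 - s1) + (s2 - x2) \<bullet> (s1 - s2) = (x1 - x2) \<bullet> (s1 - s2) - norm (s1 - s2)^2"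
    unfolding power2_norm_eq_inner by (simp add: inner_diff_left inner_diff_right inner_commute)
  with 3 have "norm (s1 - s2)^2 \<le> (x1 - x2) \<bullet> (s1 - s2)" by simp
  also have "\<dots> \<le> norm (x1 - x2) * norm (s1 - s2)" by (rule norm_cauchy_schwarz)
  finally have "norm (s1 - s2) * norm (s1 - s2) \<le> norm (x1 - x2) * norm (s1 - s2)" by (simp add: power2_eq_square)
  then have "norm (s1 - s2) \<le> norm (x1 - x2)"
    by (cases "norm (s1 - s2) = 0") (auto simp: mult_le_cancel_right)
  then show ?thesis unfolding s1_def s2_def .
qed

end


lemma line_deriv:
  fixes f :: "'v::real_inner \<Rightarrow> real"
  assumes "is_gradient f g"
  shows "((\<lambda>t. f (x + t *\<^sub>R v)) has_real_derivative (g (x + t *\<^sub>R v) \<bullet> v)) (at t)"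
proof -
  have 1: "((\<lambda>t. x + t *\<^sub>R v) has_derivative (\<lambda>h. h *\<^sub>R v)) (at t)"
    by (auto intro!: derivative_eq_intros)
  have 2: "(f has_derivative (\<lambda>h. g (x + t *\<^sub>R v) \<bullet> h)) (at (x + t *\<^sub>R v))"
    using assms unfolding is_gradient_def by blast
  have "((\<lambda>t. f (x + t *\<^sub>R v)) has_derivative (\<lambda>h. g (x + t *\<^sub>R v) \<bullet> (h *\<^sub>R v))) (at t)"
    using has_derivative_compose[OF 1 2] by simp
  moreover have "(\<lambda>h. g (x + t *\<^sub>R v) \<bullet> (h *\<^sub>R v)) = (*) (g (x + t *\<^sub>R v) \<bullet> v)"
    by (auto simp: fun_eq_iff)
  ultimately show ?thesis unfolding has_field_derivative_def by simp
qed

lemma sc_convex: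
  assumes "strongly_convex mu f" "0 \<le> mu" "0 \<le> t" "t \<le> 1"
  shows "f (t *\<^sub>R x + (1 - t) *\<^sub>R y) \<le> t * f x + (1 - t) * f y"
proof -
  have "0 \<le> mu / 2 * t * (1 - t) * norm (x - y)^2" using assms by simp
  moreover have "f (t *\<^sub>R x + (1 - t) *\<^sub>R y) \<le> t * f x + (1 - t) * f y - mu / 2 * t * (1 - t) * norm (x - y)^2"
    using assms unfolding strongly_convex_def by blast
  ultimately show ?thesis by linarith
qed

lemma grad_ineq:
  fixes f :: "'v::real_inner \<Rightarrow> real"
  assumes cv: "strongly_convex mu f" "0 \<le> mu" and gr: "is_gradient f g"
  shows "f x + g x \<bullet> (y - x) \<le> f y"
proof (rule ccontr)
  assume "\<not> ?thesis"
  then have lt: "f y - f x < g x \<bullet> (y - x)" by simp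
  define \<psi> where "\<psi> t = f (x + t *\<^sub>R (y - x)) - t * (f y - f x)" for t
  have "DERIV \<psi> 0 :> g x \<bullet> (y - x) - (f y - f x)"
    unfolding \<psi>_def using line_deriv[OF gr, of x "y - x" 0]
    by (auto intro!: derivative_eq_intros)
  then obtain d where d: "d > 0" "\<And>h. h > 0 \<Longrightarrow> h < d \<Longrightarrow> \<psi> 0 < \<psi> (0 + h)"
    using DERIV_pos_inc_right lt by (metis diff_gt_0_iff_gt)
  define h where "h = min (d / 2) 1"
  have h: "0 < h" "h < d" "h \<le> 1" using d unfolding h_def by auto
  have "\<psi> 0 < \<psi> h" using d(2)[OF h(1) h(2)] by simp
  moreover have "x + h *\<^sub>R (y - x) = h *\<^sub>R y + (1 - h) *\<^sub>R x" by (simp add: algebra_simps)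
  then have "\<psi> h \<le> h * f y + (1 - h) * f x - h * (f y - f x)"
    unfolding \<psi>_def using sc_convex[OF cv, of h y x] h by simp
  ultimately show False unfolding \<psi>_def by (simp add: algebra_simps)
qed

lemma descent:
  fixes f :: "'v::real_inner \<Rightarrow> real"
  assumes sm: "smooth L f g"
  shows "f y \<le> f x + g x \<bullet> (y - x) + L / 2 * norm (y - x)^2"
proof -
  define v where "v = y - x"
  have gr: "is_gradient f g" and lip: "\<And>a b. norm (g a - g b) \<le> L * norm (a - b)"
    using sm unfolding smooth_def by auto
  define \<psi> where "\<psi> t = f (x + t *\<^sub>R v) - t * (g x \<bullet> v) - L / 2 * t^2 * norm v ^2" for t
  have der: "DERIV \<psi> t :> g (x + t *\<^sub>R v) \<bullet> v - g x \<bullet> v - L * t * norm v ^2" for t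
    unfolding \<psi>_def using line_deriv[OF gr, of x v t]
    by (auto intro!: derivative_eq_intros simp: power2_eq_square)
  have nonpos: "g (x + t *\<^sub>R v) \<bullet> v - g x \<bullet> v - L * t * norm v ^2 \<le> 0" if "0 \<le> t" for t
  proof -
    have "g (x + t *\<^sub>R v) \<bullet> v - g x \<bullet> v = (g (x + t *\<^sub>R v) - g x) \<bullet> v" by (simp add: inner_diff_left)
    also have "\<dots> \<le> norm (g (x + t *\<^sub>R v) - g x) * norm v" by (rule norm_cauchy_schwarz)
    also have "\<dots> \<le> (L * norm (t *\<^sub>R v)) * norm v"
      using lip[of "x + t *\<^sub>R v" x] by (intro mult_right_mono) auto
    also have "\<dots> = L * t * norm v ^2" using that by (simp add: power2_eq_square)
    finally show ?thesis by simp
  qed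
  have "\<psi> 1 \<le> \<psi> 0"
  proof (rule DERIV_nonpos_imp_nonincreasing[of 0 1])
    fix t :: real assume "0 \<le> t" "t \<le> 1"
    then show "\<exists>y. DERIV \<psi> t :> y \<and> y \<le> 0" using der[of t] nonpos[of t] by blast
  qed simp
  then show ?thesis unfolding \<psi>_def v_def by (simp add: algebra_simps)
qed

lemma key_smooth:
  fixes f :: "'v::real_inner \<Rightarrow> real"
  assumes cv: "strongly_convex mu f" "0 \<le> mu" and sm: "smooth L f g" and L: "0 < L"
  shows "f x + g x \<bullet> (y - x) + norm (g y - g x)^2 / (2 * L) \<le> f y"
proof -
  have gr: "is_gradient f g" using sm unfolding smooth_def by auto
  define w where "w = g y - g x"
  define z where "z = y - (1 / L) *\<^sub>R w"
  have 1: "f x + g x \<bullet> (z - x) \<le> f z" by (rule grad_ineq[OF cv gr])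
  have 2: "f z \<le> f y + g y \<bullet> (z - y) + L / 2 * norm (z - y)^2" by (rule descent[OF sm])
  have zy: "z - y = - ((1 / L) *\<^sub>R w)" unfolding z_def by simp
  have "norm (z - y)^2 = (1/L)^2 * norm w ^2" unfolding zy using L by (simp add: power_divide field_simps)
  then have 3: "L / 2 * norm (z - y)^2 = norm w^2 / (2 * L)" using L by (simp add: power2_eq_square field_simps)
  have 4: "g y \<bullet> (z - y) = - (g y \<bullet> w) / L" unfolding zy by (simp add: inner_minus_right)
  have 5: "g x \<bullet> (z - x) = g x \<bullet> (y - x) - (g x \<bullet> w) / L"
    unfolding z_def by (simp add: inner_diff_right)
  have 6: "g y \<bullet> w - g x \<bullet> w = norm w ^2" unfolding w_def power2_norm_eq_inner
    by (simp add: inner_diff_left)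
  have "f x + g x \<bullet> (y - x) - (g x \<bullet> w) / L \<le> f y - (g y \<bullet> w) / L + norm w^2 / (2 * L)"
    using 1 2 3 4 5 by linarith
  moreover have "(g y \<bullet> w) / L - (g x \<bullet> w) / L = norm w ^2 / L" using 6 by (simp add: diff_divide_distrib[symmetric])
  moreover have "norm w^2 / L = norm w^2 / (2 * L) + norm w^2 / (2 * L)" by (simp add: field_simps)
  ultimately show ?thesis unfolding w_def by linarith
qed


lemma kron_nth: "kron M x $ i = (\<Sum>j\<in>UNIV. (M $ i $ j) *\<^sub>R (x $ j))"
  unfolding kron_def by simp

lemma kron_add: "kron M (x + y) = kron M x + kron M y"
  by (simp add: vec_eq_iff kron_nth scaleR_add_right sum.distrib)

lemma kron_diff: "kron M (x - y) = kron M x - kron M y"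
  by (simp add: vec_eq_iff kron_nth scaleR_diff_right sum_subtractf)

lemma kron_scaleR: "kron M (c *\<^sub>R x) = c *\<^sub>R kron M x"
  by (simp add: vec_eq_iff kron_nth scaleR_sum_right mult.commute)

lemma kron_zero: "kron M 0 = 0"
  by (simp add: vec_eq_iff kron_nth)

lemma kron_minus: "kron M (- x) = - kron M x"
  using kron_diff[of M 0 x] by (simp add: kron_zero)

lemma kron_linear: "linear (kron M)"
  by (rule linearI) (simp_all add: kron_add kron_scaleR)

lemma kron_mat1: "kron (mat 1) x = x"
proof -
  have "(\<Sum>j\<in>UNIV. (mat 1 $ i $ j) *\<^sub>R (x $ j)) = x $ i" for i
  proof -
    have "(\<lambda>j. (mat 1 $ i $ j) *\<^sub>R (x $ j)) = (\<lambda>j. if i = j then x $ j else 0)"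
      by (auto simp: mat_def)
    then show ?thesis unfolding \<open>(\<lambda>j. (mat 1 $ i $ j) *\<^sub>R (x $ j)) = _\<close> by simp
  qed
  then show ?thesis by (simp add: vec_eq_iff kron_nth)
qed

lemma kron_zero_mat: "kron 0 x = 0"
  by (simp add: vec_eq_iff kron_nth)

lemma kron_matdiff: "kron (M - N) x = kron M x - kron N x"
  by (simp add: vec_eq_iff kron_nth scaleR_diff_left sum_subtractf)

lemma kron_mult: "kron (M ** N) x = kron M (kron N x)"
proof -
  have "(\<Sum>j\<in>UNIV. (\<Sum>k\<in>UNIV. M $ i $ k * N $ k $ j) *\<^sub>R x $ j)
      = (\<Sum>k\<in>UNIV. M $ i $ k *\<^sub>R (\<Sum>j\<in>UNIV. N $ k $ j *\<^sub>R x $ j))" for i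
  proof -
    have "(\<Sum>j\<in>UNIV. (\<Sum>k\<in>UNIV. M $ i $ k * N $ k $ j) *\<^sub>R x $ j)
        = (\<Sum>j\<in>UNIV. \<Sum>k\<in>UNIV. M $ i $ k *\<^sub>R (N $ k $ j *\<^sub>R x $ j))"
      by (simp add: scaleR_sum_left)
    also have "\<dots> = (\<Sum>k\<in>UNIV. \<Sum>j\<in>UNIV. M $ i $ k *\<^sub>R (N $ k $ j *\<^sub>R x $ j))"
      by (rule sum.swap)
    also have "\<dots> = (\<Sum>k\<in>UNIV. M $ i $ k *\<^sub>R (\<Sum>j\<in>UNIV. N $ k $ j *\<^sub>R x $ j))"
      by (simp add: scaleR_sum_right)
    finally show ?thesis .
  qed
  then show ?thesis by (simp add: vec_eq_iff kron_nth matrix_matrix_mult_def)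
qed

lemma kron_adj: "kron M x \<bullet> y = x \<bullet> kron (transpose M) y"
proof -
  have "kron M x \<bullet> y = (\<Sum>i\<in>UNIV. \<Sum>j\<in>UNIV. M $ i $ j * (x $ j \<bullet> y $ i))"
    by (simp add: inner_vec_def kron_nth inner_sum_left)
  also have "\<dots> = (\<Sum>j\<in>UNIV. \<Sum>i\<in>UNIV. M $ i $ j * (x $ j \<bullet> y $ i))"
    by (rule sum.swap)
  also have "\<dots> = x \<bullet> kron (transpose M) y"
    by (simp add: inner_vec_def kron_nth inner_sum_right transpose_def)
  finally show ?thesis .
qed

lemma kron_sym: "transpose M = M \<Longrightarrow> kron M x \<bullet> y = x \<bullet> kron M y"
  using kron_adj[of M x y] by simp

lemma kron_psd:
  fixes x :: "'v::euclidean_space ^ 'n::finite"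
  assumes "psd M"
  shows "0 \<le> x \<bullet> kron M x"
proof -
  define c where "c b = (\<chi> i. x $ i \<bullet> b)" for b :: 'v
  have "x \<bullet> kron M x = (\<Sum>i\<in>UNIV. \<Sum>j\<in>UNIV. M $ i $ j * (x $ i \<bullet> x $ j))"
    by (simp add: inner_vec_def kron_nth inner_sum_right)
  also have "\<dots> = (\<Sum>i\<in>UNIV. \<Sum>j\<in>UNIV. M $ i $ j * (\<Sum>b\<in>Basis. (x $ i \<bullet> b) * (x $ j \<bullet> b)))"
    by (rule sum.cong[OF refl])+ (rule arg_cong[OF euclidean_inner])
  also have "\<dots> = (\<Sum>i\<in>UNIV. \<Sum>j\<in>UNIV. \<Sum>b\<in>Basis. M $ i $ j * ((x $ i \<bullet> b) * (x $ j \<bullet> b)))"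
    by (simp only: sum_distrib_left)
  also have "\<dots> = (\<Sum>i\<in>UNIV. \<Sum>b\<in>Basis. \<Sum>j\<in>UNIV. M $ i $ j * ((x $ i \<bullet> b) * (x $ j \<bullet> b)))"
    by (rule sum.cong[OF refl], rule sum.swap)
  also have "\<dots> = (\<Sum>b\<in>Basis. \<Sum>i\<in>UNIV. \<Sum>j\<in>UNIV. M $ i $ j * ((x $ i \<bullet> b) * (x $ j \<bullet> b)))"
    by (rule sum.swap)
  also have "\<dots> = (\<Sum>b\<in>Basis. c b \<bullet> (M *v c b))"
  proof (rule sum.cong[OF refl])
    fix b :: 'v
    have "c b \<bullet> (M *v c b) = (\<Sum>i\<in>UNIV. (x $ i \<bullet> b) * (\<Sum>j\<in>UNIV. M $ i $ j * (x $ j \<bullet> b)))"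
      by (simp add: c_def inner_vec_def matrix_vector_mult_def)
    also have "\<dots> = (\<Sum>i\<in>UNIV. \<Sum>j\<in>UNIV. M $ i $ j * ((x $ i \<bullet> b) * (x $ j \<bullet> b)))"
      by (simp add: sum_distrib_left mult_ac)
    finally show "(\<Sum>i\<in>UNIV. \<Sum>j\<in>UNIV. M $ i $ j * ((x $ i \<bullet> b) * (x $ j \<bullet> b))) = c b \<bullet> (M *v c b)" by simp
  qed
  also have "\<dots> \<ge> 0" using assms unfolding psd_def by (intro sum_nonneg) auto
  finally show ?thesis .
qed

lemma kron_consensus:
  fixes z :: "'v::euclidean_space ^ 'n::finite"
  assumes Bnull: "{v. B *v v = 0} = span {vec 1}" and Astoch: "A *v vec 1 = vec 1"
    and Bz: "kron B z = 0"
  shows "kron A z = z"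
proof -
  have eqc: "z $ i = z $ j" for i j
  proof (rule euclidean_eqI)
    fix b :: 'v assume b: "b \<in> Basis"
    define c where "c = (\<chi> i. z $ i \<bullet> b)"
    have "(B *v c) $ i = kron B z $ i \<bullet> b" for i
      by (simp add: c_def matrix_vector_mult_def kron_nth inner_sum_left)
    then have "B *v c = 0" using Bz by (simp add: vec_eq_iff)
    then have "c \<in> span {vec 1}" using Bnull by blast
    then have "\<exists>t. c = t *\<^sub>R vec 1" by (auto simp: span_singleton)
    then obtain t where "c = t *\<^sub>R vec 1" by blast
    then show "z $ i \<bullet> b = z $ j \<bullet> b" unfolding c_def by (simp add: vec_eq_iff)
  qed
  have rs: "(\<Sum>j\<in>UNIV. A $ i $ j) = 1" for i
    using Astoch by (simp add: vec_eq_iff matrix_vector_mult_def)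
  have "kron A z $ i = z $ i" for i
  proof -
    have "kron A z $ i = (\<Sum>j\<in>UNIV. A $ i $ j *\<^sub>R z $ i)"
      unfolding kron_nth by (rule sum.cong[OF refl]) (metis eqc)
    also have "\<dots> = z $ i" by (simp add: scaleR_sum_left[symmetric] rs)
    finally show ?thesis .
  qed
  then show ?thesis by (simp add: vec_eq_iff)
qed


lemma norm_sq_vec: "norm (x :: 'a::real_inner ^ 'n::finite)^2 = (\<Sum>i\<in>UNIV. norm (x $ i)^2)"
  by (simp add: power2_norm_eq_inner inner_vec_def)

locale flex =
  fixes f :: "'n::finite \<Rightarrow> 'v::euclidean_space \<Rightarrow> real"
    and g :: "'n \<Rightarrow> 'v \<Rightarrow> 'v"
    and r :: "'v \<Rightarrow> ereal"
    and mu L alpha p :: real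
    and A B S :: "real^'n^'n"
    and xs ws us :: "'v^'n"
  assumes mu: "0 \<le> mu" and L: "0 < L"
    and f_cvx: "\<forall>i. strongly_convex mu (f i)"
    and f_smooth: "\<forall>i. smooth L (f i) (g i)"
    and r_proper: "ext_proper r" and r_closed: "ext_closed r" and r_convex: "ext_convex r"
    and A_sym: "transpose A = A"
    and A_stoch: "A *v vec 1 = vec 1"
    and B_null: "{v. B *v v = 0} = span {vec 1}"
    and IAB_psd: "psd (mat 1 - A ** A - B)"
    and S_sqrt: "transpose S = S \<and> psd S \<and> S ** S = B"
    and alpha: "0 < alpha \<and> alpha < 2 / L"
    and p: "0 < p \<and> p \<le> 1"
    and fix_w: "ws = xs - alpha *\<^sub>R gradF g xs"
    and fix_x: "xs = proxR alpha r (kron A (ws - kron S us))"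
    and fix_u: "0 = kron S (ws - kron S us)"
    and us_range: "us \<in> range (kron S)"
begin

definition "zst x u = (x - alpha *\<^sub>R gradF g x) - kron S u"
definition "T1 s = (proxR alpha r (kron A (zst (fst s) (snd s))), snd s + p *\<^sub>R kron S (zst (fst s) (snd s)))"
definition "T0 s = (proxR alpha r (zst (fst s) (snd s)), snd s)"
definition "V s = norm (fst s - xs)^2 + (1 / p^2) * norm (snd s - us)^2"
definition "FF x = (\<Sum>i\<in>UNIV. f i (x $ i))"
definition "Dg x = FF x - FF xs - gradF g xs \<bullet> (x - xs)"
definition "c1 = alpha * (2 - alpha * L)"
definition "c0 = alpha * (2 - alpha * L) / (2 * L)"
definition "Phi s = c1 * Dg (fst s) + c0 * norm (gradF g (fst s) - gradF g xs)^2 + norm (kron S (snd s - us))^2"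

lemma flex_step:
  "flexatc A S alpha p g r x0 th (Suc k) = (if th k then T1 else T0) (flexatc A S alpha p g r x0 th k)"
  by (simp add: Let_def T1_def T0_def zst_def kron_mat1 kron_zero_mat split: prod.split)

lemma c_pos: "0 < c1" "0 < c0"
proof -
  have "alpha * L < 2" using alpha L by (simp add: field_simps)
  then show "0 < c1" "0 < c0" unfolding c1_def c0_def using alpha L by auto
qed

lemma S_sym: "transpose S = S" and B_eq: "S ** S = B" using S_sqrt by auto

lemma prox_loc: "proxloc r alpha"
  using r_proper r_closed r_convex alpha by (unfold_locales) auto

lemma proxR_nonexp: "norm (proxR alpha r x - proxR alpha r y) \<le> norm (x - y)"
proof -
  interpret proxloc r alpha by (rule prox_loc)
  have "norm (proxR alpha r x - proxR alpha r y)^2 \<le> norm (x - y)^2"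
    unfolding norm_sq_vec proxR_def
    by (intro sum_mono power_mono) (auto intro: prox_nonexp)
  then show ?thesis by (simp add: power_mono_iff)
qed

lemma F_key: "FF x + gradF g x \<bullet> (y - x) + norm (gradF g y - gradF g x)^2 / (2 * L) \<le> FF y"
proof -
  have "f i (x $ i) + g i (x $ i) \<bullet> (y $ i - x $ i) + norm (g i (y $ i) - g i (x $ i))^2 / (2 * L) \<le> f i (y $ i)" for i
    using key_smooth[of mu "f i" L "g i" "x $ i" "y $ i"] f_cvx f_smooth mu L by auto
  then have "(\<Sum>i\<in>UNIV. f i (x $ i) + g i (x $ i) \<bullet> (y $ i - x $ i) + norm (g i (y $ i) - g i (x $ i))^2 / (2 * L)) \<le> (\<Sum>i\<in>UNIV. f i (y $ i))"
    by (intro sum_mono) auto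
  then show ?thesis
    unfolding FF_def gradF_def inner_vec_def norm_sq_vec sum.distrib sum_divide_distrib[symmetric]
    by simp
qed

lemma zs_cons: "kron A (ws - kron S us) = ws - kron S us"
proof (rule kron_consensus[OF B_null A_stoch])
  show "kron B (ws - kron S us) = 0" using fix_u B_eq kron_mult[of S S] by (metis kron_zero)
qed

lemma Dg_nonneg: "norm (gradF g x - gradF g xs)^2 / (2 * L) \<le> Dg x"
  using F_key[of xs x] unfolding Dg_def by simp

lemma grad_step:
  "norm ((x - alpha *\<^sub>R gradF g x) - ws)^2 \<le> norm (x - xs)^2 - c1 * Dg x - c0 * norm (gradF g x - gradF g xs)^2"
proof -
  define d where "d = gradF g x - gradF g xs"
  define N where "N = norm d ^2"
  define D where "D = Dg x"
  define D' where "D' = FF xs - FF x - gradF g x \<bullet> (xs - x)"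
  have hD: "N / (2 * L) \<le> D" using Dg_nonneg unfolding D_def N_def d_def .
  have hD': "N / (2 * L) \<le> D'" using F_key[of x xs] unfolding D'_def N_def d_def by (simp add: norm_minus_commute)
  have sum: "D + D' = (x - xs) \<bullet> d" unfolding D_def D'_def Dg_def d_def
    by (simp add: inner_diff_left inner_diff_right inner_commute)
  have wd: "(x - alpha *\<^sub>R gradF g x) - ws = (x - xs) - alpha *\<^sub>R d" unfolding fix_w d_def by (simp add: algebra_simps)
  have "norm ((x - xs) - alpha *\<^sub>R d)^2 = norm (x - xs)^2 - 2 * alpha * ((x - xs) \<bullet> d) + alpha^2 * N"
    unfolding N_def power2_norm_eq_inner by (simp add: inner_diff_left inner_diff_right inner_commute power2_eq_square)
  moreover have "- 2 * alpha * ((x - xs) \<bullet> d) + alpha^2 * N \<le> - c1 * D - c0 * N"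
  proof -
    have e1: "alpha^2 * L * (N / (2 * L)) = alpha^2 * N / 2" using L by (simp add: field_simps)
    have e2: "2 * alpha * (N / (2 * L)) = alpha * N / L" using L by (simp add: field_simps)
    have i1: "alpha^2 * L * (N / (2 * L)) \<le> alpha^2 * L * D" using hD L by (intro mult_left_mono) auto
    have i2: "2 * alpha * (N / (2 * L)) \<le> 2 * alpha * D'" using hD' alpha by (intro mult_left_mono) auto
    have e3: "c0 * N = alpha * N / L - alpha^2 * N / 2" unfolding c0_def using L by (simp add: field_simps power2_eq_square)
    have e4: "c1 * D = 2 * alpha * D - alpha^2 * L * D" unfolding c1_def by (simp add: algebra_simps power2_eq_square)
    have e5: "- 2 * alpha * ((x - xs) \<bullet> d) = - 2 * alpha * D - 2 * alpha * D'" using sum[symmetric] by (simp add: algebra_simps)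
    show ?thesis using i1 i2 e1 e2 e3 e4 e5 by linarith
  qed
  ultimately show ?thesis unfolding wd D_def N_def d_def by linarith
qed

end


context flex begin

lemma kron_sq: "transpose M = M \<Longrightarrow> norm (kron M z)^2 = z \<bullet> kron (M ** M) z"
  unfolding power2_norm_eq_inner kron_mult by (simp add: kron_sym)

lemma lyap: "p * V (T1 s) + (1 - p) * V (T0 s) \<le> V s - Phi s"
proof -
  obtain x u where s: "s = (x, u)" by force
  define zs where "zs = ws - kron S us"
  define wt where "wt = (x - alpha *\<^sub>R gradF g x) - ws"
  define ut where "ut = u - us"
  define zt where "zt = wt - kron S ut"
  have zst: "zst x u = zs + zt" unfolding zst_def zs_def zt_def wt_def ut_def kron_diff by simp
  have Szs: "kron S zs = 0" using fix_u zs_def by simp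
  have xs1: "xs = proxR alpha r (kron A zs)" using fix_x zs_def by simp
  have xs0: "xs = proxR alpha r zs" using xs1 zs_cons zs_def by simp
  have n1: "norm (fst (T1 s) - xs) \<le> norm (kron A zt)"
    using proxR_nonexp[of "kron A (zst x u)" "kron A zs"] unfolding T1_def s xs1[symmetric] zst
    by (simp add: kron_add zst)
  have n0: "norm (fst (T0 s) - xs) \<le> norm zt"
    using proxR_nonexp[of "zst x u" zs] unfolding T0_def s xs0[symmetric] zst by (simp add: zst)
  have d1: "snd (T1 s) - us = ut + p *\<^sub>R kron S zt" unfolding T1_def s zst ut_def
    by (simp add: kron_add Szs zst)
  have d0: "snd (T0 s) - us = ut" unfolding T0_def s ut_def by simp
  define a where "a = zt \<bullet> kron (A ** A) zt"
  define b where "b = zt \<bullet> kron B zt"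
  define q where "q = kron S ut \<bullet> zt"
  have sq1: "norm (fst (T1 s) - xs)^2 \<le> a" unfolding a_def kron_sq[OF A_sym, symmetric]
    using n1 by (intro power_mono) auto
  have sq0: "norm (fst (T0 s) - xs)^2 \<le> norm zt^2" using n0 by (intro power_mono) auto
  have Szt: "norm (kron S zt)^2 = b" unfolding b_def kron_sq[OF S_sym] B_eq ..
  have psd1: "a + b \<le> norm zt^2"
  proof -
    have "0 \<le> zt \<bullet> kron (mat 1 - A ** A - B) zt" by (rule kron_psd[OF IAB_psd])
    then show ?thesis unfolding a_def b_def kron_matdiff kron_mat1 inner_diff_right power2_norm_eq_inner
      by simp
  qed
  have du: "norm (ut + p *\<^sub>R kron S zt)^2 = norm ut^2 + 2 * p * q + p^2 * b"
  proof -
    have "norm (ut + p *\<^sub>R kron S zt)^2 = norm ut^2 + 2 * p * (ut \<bullet> kron S zt) + p^2 * norm (kron S zt)^2"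
      unfolding power2_norm_eq_inner by (simp add: inner_add_left inner_add_right inner_commute power2_eq_square algebra_simps)
    then show ?thesis unfolding Szt q_def using kron_sym[OF S_sym, of ut zt] by (simp add: inner_commute)
  qed
  have zw: "norm zt^2 + 2 * q = norm wt^2 - norm (kron S ut)^2"
    unfolding zt_def q_def power2_norm_eq_inner
    by (simp add: inner_diff_left inner_diff_right inner_commute)
  have gs: "norm wt^2 \<le> norm (x - xs)^2 - c1 * Dg x - c0 * norm (gradF g x - gradF g xs)^2"
    unfolding wt_def by (rule grad_step)
  define P where "P = 1 / p^2"
  have p0: "0 < p" "p \<le> 1" using p by auto
  have V1: "V (T1 s) \<le> a + P * (norm ut^2 + 2 * p * q + p^2 * b)"
    unfolding V_def P_def d1 du using sq1 by simp
  have V0: "V (T0 s) \<le> norm zt^2 + P * norm ut^2"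
    unfolding V_def P_def d0 using sq0 by simp
  have "p * V (T1 s) + (1 - p) * V (T0 s) \<le> p * (a + P * (norm ut^2 + 2 * p * q + p^2 * b)) + (1 - p) * (norm zt^2 + P * norm ut^2)"
    using V1 V0 p0 by (intro add_mono mult_left_mono) auto
  also have "\<dots> = p * (a + b) + (1 - p) * norm zt^2 + P * norm ut^2 + 2 * q"
  proof -
    have PP: "P * p^2 = 1" unfolding P_def using p0 by simp
    have "p * (a + P * (norm ut^2 + 2 * p * q + p^2 * b)) = p * a + p * P * norm ut^2 + 2 * q * (P * p^2) + p * b * (P * p^2)"
      by (simp add: algebra_simps power2_eq_square)
    then have "p * (a + P * (norm ut^2 + 2 * p * q + p^2 * b)) = p * a + p * P * norm ut^2 + 2 * q + p * b"
      unfolding PP by simp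
    then show ?thesis by (simp add: algebra_simps)
  qed
  also have "\<dots> \<le> p * norm zt^2 + (1 - p) * norm zt^2 + P * norm ut^2 + 2 * q"
    using psd1 p0 by (simp add: mult_left_mono)
  also have "\<dots> = norm wt^2 - norm (kron S ut)^2 + P * norm ut^2"
    using zw by (simp add: algebra_simps)
  also have "\<dots> \<le> V s - Phi s"
    using gs unfolding V_def Phi_def s P_def ut_def by simp
  finally show ?thesis .
qed

end


lemma range_coercive:
  fixes T :: "'a::euclidean_space \<Rightarrow> 'a"
  assumes lin: "linear T" and sym: "\<And>x y. T x \<bullet> y = x \<bullet> T y"
  shows "\<exists>k>0. \<forall>y\<in>range T. norm y \<le> k * norm (T y)"
proof -
  define R where "R = range T"
  have sub: "subspace R" unfolding R_def using linear_subspace_image[OF lin subspace_UNIV] by simp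
  have clR: "closed R" by (rule closed_subspace[OF sub])
  define K where "K = R \<inter> sphere 0 1"
  have Kc: "compact K" unfolding K_def using clR by (intro closed_Int_compact) auto
  have bl: "bounded_linear T" using lin by (simp add: linear_conv_bounded_linear)
  show ?thesis
  proof (cases "K = {}")
    case True
    have y0: "y = 0" if "y \<in> R" for y
    proof (rule ccontr)
      assume y: "y \<noteq> 0"
      have "(1 / norm y) *\<^sub>R y \<in> R" using that sub by (simp add: subspace_scale)
      moreover have "(1 / norm y) *\<^sub>R y \<in> sphere 0 1" using y by simp
      ultimately show False using True K_def by auto
    qed
    have "norm y \<le> 1 * norm (T y)" if "y \<in> range T" for y using y0[of y] that R_def by simp
    then have "\<forall>y\<in>range T. norm y \<le> 1 * norm (T y)" by blast
    then show ?thesis by (intro exI[of _ 1]) auto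
  next
    case False
    have "continuous_on K (\<lambda>y. norm (T y))" using bl by (intro continuous_intros linear_continuous_on)
    then obtain y0 where y0: "y0 \<in> K" "\<And>y. y \<in> K \<Longrightarrow> norm (T y0) \<le> norm (T y)"
      using continuous_attains_inf[OF Kc False] by blast
    have m: "norm (T y0) > 0"
    proof (rule ccontr)
      assume "\<not> norm (T y0) > 0"
      then have T0: "T y0 = 0" by simp
      obtain z where z: "y0 = T z" using y0(1) unfolding K_def R_def by auto
      have "y0 \<bullet> y0 = z \<bullet> T y0" unfolding z using sym by simp
      then have "y0 = 0" using T0 by simp
      then show False using y0(1) K_def by simp
    qed
    define k where "k = 1 / norm (T y0)"
    have "norm y \<le> k * norm (T y)" if y: "y \<in> R" for y
    proof (cases "y = 0")
      case True then show ?thesis using m k_def by simp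
    next
      case False
      have "(1 / norm y) *\<^sub>R y \<in> K" unfolding K_def using y sub False by (simp add: subspace_scale)
      then have "norm (T y0) \<le> norm (T ((1 / norm y) *\<^sub>R y))" by (rule y0(2))
      also have "\<dots> = norm (T y) / norm y" using linear_scale[OF lin] by simp
      finally have "norm (T y0) * norm y \<le> norm (T y)" using False by (simp add: field_simps)
      then show ?thesis unfolding k_def using m by (simp add: field_simps)
    qed
    then show ?thesis unfolding R_def using m k_def by (intro exI[of _ k]) auto
  qed
qed


lemma finite_space_meas:
  assumes fin: "finite (space N)" and sing: "\<And>x. x \<in> space N \<Longrightarrow> {x} \<in> sets N"
  shows "(h :: 'a \<Rightarrow> real) \<in> borel_measurable N"
proof (rule measurableI)
  fix A :: "real set"
  have "h -` A \<inter> space N = (\<Union>x\<in>h -` A \<inter> space N. {x})" by auto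
  also have "\<dots> \<in> sets N" using fin sing by (intro sets.finite_UN) auto
  finally show "h -` A \<inter> space N \<in> sets N" .
qed auto

lemma pim_meas:
  assumes I: "finite I"
  shows "(h :: (nat \<Rightarrow> bool) \<Rightarrow> real) \<in> borel_measurable (PiM I (\<lambda>_. count_space UNIV))"
proof (rule finite_space_meas)
  show "finite (space (PiM I (\<lambda>_. count_space (UNIV :: bool set))))"
    unfolding space_PiM using I by (simp add: finite_PiE)
  fix x assume x: "x \<in> space (PiM I (\<lambda>_. count_space (UNIV :: bool set)))"
  have "{x} = PiE I (\<lambda>i. {x i})" using x unfolding space_PiM
    by (auto simp: PiE_def extensional_def fun_eq_iff)
  also have "\<dots> \<in> sets (PiM I (\<lambda>_. count_space UNIV))" using I by (intro sets_PiM_I_finite) auto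
  finally show "{x} \<in> sets (PiM I (\<lambda>_. count_space UNIV))" .
qed

definition cv :: "(nat \<Rightarrow> 'w \<Rightarrow> bool) \<Rightarrow> nat \<Rightarrow> 'w \<Rightarrow> nat \<Rightarrow> bool" where
  "cv theta k \<omega> = (\<lambda>j. if j < k then theta j \<omega> else False)"

lemma cv_Suc: "cv theta (Suc k) \<omega> = (cv theta k \<omega>)(k := theta k \<omega>)"
  by (auto simp: cv_def fun_eq_iff)

definition Cset :: "nat \<Rightarrow> (nat \<Rightarrow> bool) set" where
  "Cset k = {c. \<forall>j. k \<le> j \<longrightarrow> \<not> c j}"

lemma Cset_finite: "finite (Cset k)"
proof -
  have "Cset k \<subseteq> (\<lambda>S j. j \<in> S) ` Pow {..<k}"
  proof
    fix c assume c: "c \<in> Cset k"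
    have "c = (\<lambda>j. j \<in> {j. c j})" by simp
    moreover have "{j. c j} \<in> Pow {..<k}" using c unfolding Cset_def by (auto simp: not_le[symmetric])
    ultimately show "c \<in> (\<lambda>S j. j \<in> S) ` Pow {..<k}" by blast
  qed
  then show ?thesis by (rule finite_subset) auto
qed

lemma cv_upd_k: "(cv theta k \<omega>)(k := False) = cv theta k \<omega>"
  by (auto simp: cv_def fun_eq_iff)

lemma cv_in: "cv theta k \<omega> \<in> Cset k" unfolding cv_def Cset_def by auto

locale coins = prob_space M for M :: "'w measure" +
  fixes theta :: "nat \<Rightarrow> 'w \<Rightarrow> bool" and p :: real
  assumes indep: "indep_vars (\<lambda>_. count_space UNIV) theta UNIV"
    and distr: "\<forall>k. distr M (count_space UNIV) (theta k) = measure_pmf (bernoulli_pmf p)"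
    and p01: "0 \<le> p" "p \<le> 1"
begin

lemma theta_meas: "theta k \<in> measurable M (count_space UNIV)"
  using indep unfolding indep_vars_def2 by auto

lemma theta_set: "{\<omega> \<in> space M. theta k \<omega>} \<in> sets M"
proof -
  have "{\<omega> \<in> space M. theta k \<omega>} = theta k -` {True} \<inter> space M" by auto
  then show ?thesis using measurable_sets[OF theta_meas] by auto
qed

lemma cv_meas: "(\<lambda>\<omega>. (h :: (nat \<Rightarrow> bool) \<Rightarrow> real) (cv theta k \<omega>)) \<in> borel_measurable M"
proof (induction k arbitrary: h)
  case 0
  have "(\<lambda>\<omega>. h (cv theta 0 \<omega>)) = (\<lambda>\<omega>. h (\<lambda>_. False))" by (simp add: cv_def)
  then show ?case by simp
next
  case (Suc k)
  have "(\<lambda>\<omega>. h (cv theta (Suc k) \<omega>)) =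
        (\<lambda>\<omega>. if theta k \<omega> then h ((cv theta k \<omega>)(k := True)) else h ((cv theta k \<omega>)(k := False)))"
    by (auto simp: cv_Suc fun_eq_iff)
  also have "\<dots> \<in> borel_measurable M"
    by (rule measurable_If[OF Suc.IH Suc.IH theta_set])
  finally show ?case .
qed

lemma cv_int: "integrable M (\<lambda>\<omega>. (h :: (nat \<Rightarrow> bool) \<Rightarrow> real) (cv theta k \<omega>))"
proof (rule integrable_const_bound)
  show "AE \<omega> in M. norm (h (cv theta k \<omega>)) \<le> (\<Sum>c\<in>Cset k. \<bar>h c\<bar>)"
  proof (intro AE_I2)
    fix \<omega>
    have "\<bar>h (cv theta k \<omega>)\<bar> \<le> (\<Sum>c\<in>Cset k. \<bar>h c\<bar>)"
      by (rule member_le_sum[OF cv_in]) (auto simp: Cset_finite)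
    then show "norm (h (cv theta k \<omega>)) \<le> (\<Sum>c\<in>Cset k. \<bar>h c\<bar>)" by simp
  qed
qed (rule cv_meas)

lemma prob_theta: "(\<integral>\<omega>. (if theta k \<omega> then 1 else 0 :: real) \<partial>M) = p"
proof -
  have "(\<integral>\<omega>. (if theta k \<omega> then 1 else 0 :: real) \<partial>M) = (\<integral>\<omega>. indicator (theta k -` {True} \<inter> space M) \<omega> \<partial>M)"
    by (intro Bochner_Integration.integral_cong) (auto simp: indicator_def)
  also have "\<dots> = measure M (theta k -` {True} \<inter> space M)" by simp
  also have "\<dots> = measure (distr M (count_space UNIV) (theta k)) {True}"
    by (rule measure_distr[OF theta_meas, symmetric]) auto
  also have "\<dots> = p" using distr p01 by (simp add: measure_pmf_single)
  finally show ?thesis .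
qed

lemma indep_step:
  "(\<integral>\<omega>. (if theta k \<omega> then 1 else 0) * (G :: (nat \<Rightarrow> bool) \<Rightarrow> real) (cv theta k \<omega>) \<partial>M)
     = p * (\<integral>\<omega>. G (cv theta k \<omega>) \<partial>M)"
proof -
  define Y1 where "Y1 c = (if c k then 1 else 0 :: real)" for c :: "nat \<Rightarrow> bool"
  define Y2 where "Y2 c = G (\<lambda>j. if j < k then c j else False)" for c :: "nat \<Rightarrow> bool"
  have iv: "indep_var (PiM {k} (\<lambda>_. count_space UNIV)) (\<lambda>\<omega>. restrict (\<lambda>i. theta i \<omega>) {k})
                      (PiM {..<k} (\<lambda>_. count_space UNIV)) (\<lambda>\<omega>. restrict (\<lambda>i. theta i \<omega>) {..<k})"
    by (rule indep_var_restrict[OF indep]) auto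
  have iv2: "indep_var borel (Y1 \<circ> (\<lambda>\<omega>. restrict (\<lambda>i. theta i \<omega>) {k}))
                       borel (Y2 \<circ> (\<lambda>\<omega>. restrict (\<lambda>i. theta i \<omega>) {..<k}))"
    by (rule indep_var_compose[OF iv pim_meas pim_meas]) auto
  have e1: "Y1 \<circ> (\<lambda>\<omega>. restrict (\<lambda>i. theta i \<omega>) {k}) = (\<lambda>\<omega>. if theta k \<omega> then 1 else 0)"
    by (auto simp: Y1_def fun_eq_iff)
  have e2: "Y2 \<circ> (\<lambda>\<omega>. restrict (\<lambda>i. theta i \<omega>) {..<k}) = (\<lambda>\<omega>. G (cv theta k \<omega>))"
    by (auto simp: Y2_def fun_eq_iff cv_def)
  have iv3: "indep_var borel (\<lambda>\<omega>. if theta k \<omega> then 1 else 0 :: real) borel (\<lambda>\<omega>. G (cv theta k \<omega>))"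
    using iv2 unfolding e1 e2 .
  have int1: "integrable M (\<lambda>\<omega>. if theta k \<omega> then 1 else 0 :: real)"
    using cv_int[of "\<lambda>c. if c k then 1 else 0" "Suc k"] by (simp add: cv_def)
  show ?thesis
    using indep_var_lebesgue_integral[OF iv3 int1 cv_int] prob_theta by simp
qed

lemma exp_step:
  "(\<integral>\<omega>. (h :: (nat \<Rightarrow> bool) \<Rightarrow> real) (cv theta (Suc k) \<omega>) \<partial>M)
    = (\<integral>\<omega>. p * h ((cv theta k \<omega>)(k := True)) + (1 - p) * h ((cv theta k \<omega>)(k := False)) \<partial>M)"
proof -
  define I where "I \<omega> = (if theta k \<omega> then 1 else 0 :: real)" for \<omega>
  define G1 where "G1 c = h (c(k := True))" for c
  define G0 where "G0 c = h (c(k := False))" for c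
  have split: "h (cv theta (Suc k) \<omega>) = I \<omega> * G1 (cv theta k \<omega>) + (G0 (cv theta k \<omega>) - I \<omega> * G0 (cv theta k \<omega>))" for \<omega>
    by (simp add: I_def G1_def G0_def cv_Suc)
  have intI: "integrable M (\<lambda>\<omega>. I \<omega> * G (cv theta k \<omega>))" for G
    using cv_int[of "\<lambda>c. (if c k then 1 else 0) * G (c(k := False))" "Suc k"]
    by (simp add: I_def cv_Suc cv_upd_k)
  have "(\<integral>\<omega>. h (cv theta (Suc k) \<omega>) \<partial>M)
     = (\<integral>\<omega>. I \<omega> * G1 (cv theta k \<omega>) \<partial>M) + ((\<integral>\<omega>. G0 (cv theta k \<omega>) \<partial>M) - (\<integral>\<omega>. I \<omega> * G0 (cv theta k \<omega>) \<partial>M))"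
    unfolding split by (simp add: intI cv_int)
  also have "\<dots> = p * (\<integral>\<omega>. G1 (cv theta k \<omega>) \<partial>M) + ((\<integral>\<omega>. G0 (cv theta k \<omega>) \<partial>M) - p * (\<integral>\<omega>. G0 (cv theta k \<omega>) \<partial>M))"
    unfolding I_def indep_step ..
  also have "\<dots> = (\<integral>\<omega>. p * G1 (cv theta k \<omega>) + (1 - p) * G0 (cv theta k \<omega>) \<partial>M)"
    by (simp add: cv_int algebra_simps)
  finally show ?thesis unfolding G1_def G0_def .
qed

end


lemma flexatc_cong:
  "(\<And>j. j < k \<Longrightarrow> th j = th' j) \<Longrightarrow> flexatc A S a p g r x0 th k = flexatc A S a p g r x0 th' k"
proof (induction k)
  case 0 then show ?case by simp
next
  case (Suc k)
  have "flexatc A S a p g r x0 th k = flexatc A S a p g r x0 th' k" using Suc by simp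
  moreover have "th k = th' k" using Suc by simp
  ultimately show ?case by (simp only: flexatc.simps)
qed

locale main = flex f g r mu L alpha p A B S xs ws us + coins M theta p
  for f :: "'n::finite \<Rightarrow> 'v::euclidean_space \<Rightarrow> real" and g r mu L alpha p A B S xs ws us
    and M :: "'w measure" and theta +
  fixes x0 :: "'v^'n"
begin

definition "st c k = flexatc A S alpha p g r x0 c k"

lemma st_cv: "k \<le> K \<Longrightarrow> flexatc A S alpha p g r x0 (\<lambda>j. theta j \<omega>) k = st (cv theta K \<omega>) k"
  unfolding st_def by (rule flexatc_cong) (auto simp: cv_def)

lemma st_upd: "st (c(k := b)) (Suc k) = (if b then T1 else T0) (st c k)"
proof -
  have "st c k = st (c(k := b)) k" unfolding st_def by (rule flexatc_cong) auto
  then show ?thesis unfolding st_def flex_step by simp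
qed

lemma V_nonneg: "0 \<le> V s" unfolding V_def using p by simp

lemma Phi_nonneg: "0 \<le> Phi s"
proof -
  have "0 \<le> norm (gradF g (fst s) - gradF g xs)^2 / (2 * L)" using L by simp
  then have "0 \<le> Dg (fst s)" using Dg_nonneg by (rule order_trans)
  then show ?thesis unfolding Phi_def using c_pos by simp
qed

lemma ev_step:
  "(\<integral>\<omega>. V (st (cv theta (Suc k) \<omega>) (Suc k)) \<partial>M)
     \<le> (\<integral>\<omega>. V (st (cv theta k \<omega>) k) \<partial>M) - (\<integral>\<omega>. Phi (st (cv theta k \<omega>) k) \<partial>M)"
proof -
  have "(\<integral>\<omega>. V (st (cv theta (Suc k) \<omega>) (Suc k)) \<partial>M)
      = (\<integral>\<omega>. p * V (st ((cv theta k \<omega>)(k := True)) (Suc k)) + (1 - p) * V (st ((cv theta k \<omega>)(k := False)) (Suc k)) \<partial>M)"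
    using exp_step[of "\<lambda>c. V (st c (Suc k))" k] by simp
  also have "\<dots> = (\<integral>\<omega>. p * V (T1 (st (cv theta k \<omega>) k)) + (1 - p) * V (T0 (st (cv theta k \<omega>) k)) \<partial>M)"
    unfolding st_upd by simp
  also have "\<dots> \<le> (\<integral>\<omega>. V (st (cv theta k \<omega>) k) - Phi (st (cv theta k \<omega>) k) \<partial>M)"
    using cv_int[of "\<lambda>c. p * V (T1 (st c k)) + (1 - p) * V (T0 (st c k))" k]
          cv_int[of "\<lambda>c. V (st c k) - Phi (st c k)" k]
    by (intro integral_mono) (auto intro: lyap)
  also have "\<dots> = (\<integral>\<omega>. V (st (cv theta k \<omega>) k) \<partial>M) - (\<integral>\<omega>. Phi (st (cv theta k \<omega>) k) \<partial>M)"
    using cv_int[of "\<lambda>c. V (st c k)" k] cv_int[of "\<lambda>c. Phi (st c k)" k] by simp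
  finally show ?thesis .
qed

definition "eP k = (\<integral>\<omega>. Phi (st (cv theta k \<omega>) k) \<partial>M)"

lemma eP_nonneg: "0 \<le> eP k" unfolding eP_def by (intro integral_nonneg_AE) (auto intro: Phi_nonneg)

lemma eP_sum: "(\<Sum>k<K. eP k) \<le> V (x0, 0)"
proof -
  define ev where "ev k = (\<integral>\<omega>. V (st (cv theta k \<omega>) k) \<partial>M)" for k
  have "(\<Sum>k<K. eP k) \<le> ev 0 - ev K"
  proof (induction K)
    case 0 then show ?case by simp
  next
    case (Suc K)
    have "ev (Suc K) \<le> ev K - eP K" using ev_step[of K] unfolding ev_def eP_def .
    then show ?case using Suc by simp
  qed
  moreover have "ev 0 = V (x0, 0)" unfolding ev_def st_def by (simp add: cv_def prob_space)
  moreover have "0 \<le> ev K" unfolding ev_def by (intro integral_nonneg_AE) (auto intro: V_nonneg)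
  ultimately show ?thesis by simp
qed

lemma eP_summable: "summable eP"
  using eP_nonneg eP_sum by (intro summableI_nonneg_bounded) auto

lemma eP_tendsto: "eP \<longlonglongrightarrow> 0"
  using eP_summable by (rule summable_LIMSEQ_zero)

lemma u_range: "snd (st c k) \<in> range (kron S)"
proof (induction k)
  case 0
  have "(0 :: 'v^'n) = kron S 0" by (simp add: kron_zero)
  then show ?case unfolding st_def by simp
next
  case (Suc k)
  have sub: "subspace (range (kron S))" using linear_subspace_image[OF kron_linear subspace_UNIV] by simp
  have "snd (T1 (st c k)) \<in> range (kron S)"
    unfolding T1_def using Suc sub by (auto intro!: subspace_add subspace_scale)
  moreover have "snd (T0 (st c k)) \<in> range (kron S)" unfolding T0_def using Suc by simp
  ultimately show ?case unfolding st_def flex_step by (auto simp: st_def)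
qed



end


lemma convex_normsq: "convex_on UNIV (\<lambda>y :: 'a::real_inner. norm y ^2)"
  unfolding convex_on_def
proof (intro conjI ballI allI impI)
  fix x y :: 'a and u v :: real
  assume u: "0 \<le> u" and v: "0 \<le> v" and uv: "u + v = 1"
  have "u * norm x^2 + v * norm y^2 - norm (u *\<^sub>R x + v *\<^sub>R y)^2 = u * v * norm (x - y)^2"
  proof -
    have v': "v = 1 - u" using uv by simp
    show ?thesis unfolding v' power2_norm_eq_inner
      by (simp add: inner_add_left inner_add_right inner_diff_left inner_diff_right inner_commute algebra_simps power2_eq_square)
  qed
  moreover have "0 \<le> u * v * norm (x - y)^2" using u v by simp
  ultimately show "norm (u *\<^sub>R x + v *\<^sub>R y)^2 \<le> u * norm x^2 + v * norm y^2" by linarith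
qed simp

context main begin

lemma Dg_convex: "convex_on UNIV Dg"
  unfolding convex_on_def
proof (intro conjI ballI allI impI)
  fix x y :: "'v^'n" and u v :: real
  assume u: "0 \<le> u" and v: "0 \<le> v" and uv: "u + v = 1"
  have v': "v = 1 - u" using uv by simp
  have "f i ((u *\<^sub>R x + v *\<^sub>R y) $ i) \<le> u * f i (x $ i) + v * f i (y $ i)" for i
  proof -
    have u1: "u \<le> 1" using uv v by simp
    show ?thesis using sc_convex[of mu "f i" u "x $ i" "y $ i"] f_cvx mu u u1 unfolding v' by auto
  qed
  then have "(\<Sum>i\<in>UNIV. f i ((u *\<^sub>R x + v *\<^sub>R y) $ i)) \<le> (\<Sum>i\<in>UNIV. u * f i (x $ i) + v * f i (y $ i))"
    by (rule sum_mono)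
  also have "\<dots> = u * FF x + v * FF y" unfolding FF_def by (simp add: sum.distrib sum_distrib_left)
  finally have 1: "FF (u *\<^sub>R x + v *\<^sub>R y) \<le> u * FF x + v * FF y" unfolding FF_def .
  have 2: "gradF g xs \<bullet> (u *\<^sub>R x + v *\<^sub>R y - xs) = u * (gradF g xs \<bullet> (x - xs)) + v * (gradF g xs \<bullet> (y - xs))"
    unfolding v' by (simp add: inner_diff_right inner_add_right algebra_simps)
  have 3: "FF xs = u * FF xs + v * FF xs" using uv by (metis distrib_right mult_1)
  have 4: "u * Dg x + v * Dg y = u * FF x + v * FF y - (u * FF xs + v * FF xs)
       - (u * (gradF g xs \<bullet> (x - xs)) + v * (gradF g xs \<bullet> (y - xs)))"
    unfolding Dg_def by (simp add: algebra_simps)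
  show "Dg (u *\<^sub>R x + v *\<^sub>R y) \<le> u * Dg x + v * Dg y"
    unfolding 4 unfolding Dg_def using 1 2 3 by linarith
qed simp

lemma Phi_ge: "norm (kron S (snd s - us))^2 \<le> Phi s" "c0 * norm (gradF g (fst s) - gradF g xs)^2 \<le> Phi s"
   "c1 * Dg (fst s) \<le> Phi s"
proof -
  have "0 \<le> norm (gradF g (fst s) - gradF g xs)^2 / (2 * L)" using L by simp
  then have D: "0 \<le> Dg (fst s)" using Dg_nonneg by (rule order_trans)
  then show "norm (kron S (snd s - us))^2 \<le> Phi s" "c0 * norm (gradF g (fst s) - gradF g xs)^2 \<le> Phi s"
     "c1 * Dg (fst s) \<le> Phi s"
    unfolding Phi_def using c_pos by auto
qed

lemma u_bound: "\<exists>kap>0. \<forall>c k. norm (snd (st c k) - us)^2 \<le> kap * Phi (st c k)"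
proof -
  have "\<exists>k>0. \<forall>y\<in>range (kron S :: 'v^'n \<Rightarrow> 'v^'n). norm y \<le> k * norm (kron S y)"
    by (rule range_coercive[OF kron_linear kron_sym[OF S_sym]])
  then obtain kap0 where kap0: "kap0 > 0" "\<And>y :: 'v^'n. y \<in> range (kron S) \<Longrightarrow> norm y \<le> kap0 * norm (kron S y)"
    by blast
  have sub: "subspace (range (kron S :: 'v^'n \<Rightarrow> 'v^'n))" using linear_subspace_image[OF kron_linear subspace_UNIV] by simp
  have "norm (snd (st c k) - us)^2 \<le> kap0^2 * Phi (st c k)" for c k
  proof -
    have "snd (st c k) - us \<in> range (kron S)" using u_range us_range sub by (intro subspace_diff) auto
    then have "norm (snd (st c k) - us) \<le> kap0 * norm (kron S (snd (st c k) - us))" by (rule kap0)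
    then have "norm (snd (st c k) - us)^2 \<le> (kap0 * norm (kron S (snd (st c k) - us)))^2"
      by (intro power_mono) auto
    also have "\<dots> = kap0^2 * norm (kron S (snd (st c k) - us))^2" by (simp add: power_mult_distrib)
    also have "\<dots> \<le> kap0^2 * Phi (st c k)" using Phi_ge(1) by (intro mult_left_mono) auto
    finally show ?thesis .
  qed
  then show ?thesis using kap0 by (intro exI[of _ "kap0^2"]) auto
qed

lemma g_bound: "norm (gradF g (fst s) - gradF g xs)^2 \<le> Phi s / c0"
  using Phi_ge(2)[of s] c_pos by (simp add: field_simps)

lemma Dg_bound: "Dg (fst s) \<le> Phi s / c1"
  using Phi_ge(3)[of s] c_pos by (simp add: field_simps)

lemma ae_phi: "AE \<omega> in M. (\<lambda>k. Phi (st (cv theta k \<omega>) k)) \<longlonglongrightarrow> 0"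
proof -
  define Ph where "Ph k \<omega> = Phi (st (cv theta k \<omega>) k)" for k \<omega>
  have meas: "(\<lambda>\<omega>. ennreal (Ph k \<omega>)) \<in> borel_measurable M" for k
    unfolding Ph_def using cv_meas[of "\<lambda>c. Phi (st c k)" k] by measurable
  have "(\<integral>\<^sup>+\<omega>. (\<Sum>k. ennreal (Ph k \<omega>)) \<partial>M) = (\<Sum>k. \<integral>\<^sup>+\<omega>. ennreal (Ph k \<omega>) \<partial>M)"
    by (rule nn_integral_suminf[OF meas])
  also have "\<dots> = (\<Sum>k. ennreal (eP k))"
  proof (rule arg_cong[where f=suminf], rule ext)
    fix k
    show "(\<integral>\<^sup>+\<omega>. ennreal (Ph k \<omega>) \<partial>M) = ennreal (eP k)"
      unfolding eP_def Ph_def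
      by (rule nn_integral_eq_integral[OF cv_int]) (auto intro: Phi_nonneg)
  qed
  also have "\<dots> = ennreal (\<Sum>k. eP k)" by (rule suminf_ennreal2[OF eP_nonneg eP_summable])
  finally have fin: "(\<integral>\<^sup>+\<omega>. (\<Sum>k. ennreal (Ph k \<omega>)) \<partial>M) \<noteq> \<infinity>" by simp
  have "AE \<omega> in M. (\<Sum>k. ennreal (Ph k \<omega>)) \<noteq> \<infinity>"
    by (rule nn_integral_PInf_AE[OF _ fin]) (use meas in measurable)
  then show ?thesis
  proof (rule AE_mp, intro AE_I2 impI)
    fix \<omega> assume "(\<Sum>k. ennreal (Ph k \<omega>)) \<noteq> \<infinity>"
    then have "summable (\<lambda>k. Ph k \<omega>)"
      by (intro summable_suminf_not_top) (auto simp: Ph_def Phi_nonneg)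
    then show "(\<lambda>k. Phi (st (cv theta k \<omega>) k)) \<longlonglongrightarrow> 0"
      using summable_LIMSEQ_zero unfolding Ph_def by blast
  qed
qed

end


context main begin

lemma erg_pt:
  assumes K: "K \<ge> 1" and kap: "\<forall>c k. norm (snd (st c k) - us)^2 \<le> kap * Phi (st c k)"
  shows "norm (gradF g ((1 / real K) *\<^sub>R (\<Sum>k<K. fst (st c k))) - gradF g xs)^2
         + norm ((1 / real K) *\<^sub>R (\<Sum>k<K. snd (st c k)) - us)^2
       \<le> (2 * L / c1 + kap) / real K * (\<Sum>k<K. Phi (st c k))"
proof -
  define a where "a = 1 / real K"
  have a0: "0 \<le> a" unfolding a_def by simp
  have asum: "(\<Sum>k<K. a) = 1" unfolding a_def using K by simp
  have ne: "{..<K} \<noteq> {}" using K by (metis One_nat_def Suc_le_eq empty_iff lessThan_iff)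
  define xb where "xb = a *\<^sub>R (\<Sum>k<K. fst (st c k))"
  have xb: "xb = (\<Sum>k<K. a *\<^sub>R fst (st c k))" unfolding xb_def by (simp add: scaleR_sum_right)
  have n1: "norm (gradF g xb - gradF g xs)^2 \<le> 2 * L * Dg xb"
    using Dg_nonneg[of xb] L by (simp add: field_simps)
  have "Dg xb \<le> (\<Sum>k<K. a * Dg (fst (st c k)))"
    unfolding xb by (rule convex_on_sum[OF _ ne Dg_convex asum]) (use a0 in auto)
  also have "\<dots> \<le> (\<Sum>k<K. a * (Phi (st c k) / c1))"
    using a0 by (intro sum_mono mult_left_mono Dg_bound)
  finally have n2: "Dg xb \<le> (\<Sum>k<K. a * (Phi (st c k) / c1))" .
  have ub: "a *\<^sub>R (\<Sum>k<K. snd (st c k)) - us = (\<Sum>k<K. a *\<^sub>R (snd (st c k) - us))"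
  proof -
    have "(\<Sum>k<K. a *\<^sub>R us) = us" using asum by (simp add: scaleR_sum_left[symmetric])
    then show ?thesis by (simp add: scaleR_sum_right scaleR_diff_right sum_subtractf)
  qed
  have "norm (a *\<^sub>R (\<Sum>k<K. snd (st c k)) - us)^2 \<le> (\<Sum>k<K. a * norm (snd (st c k) - us)^2)"
    unfolding ub by (rule convex_on_sum[OF _ ne convex_normsq asum, where y="\<lambda>k. snd (st c k) - us"]) (use a0 in auto)
  also have "\<dots> \<le> (\<Sum>k<K. a * (kap * Phi (st c k)))"
    using a0 kap by (intro sum_mono mult_left_mono) auto
  finally have n3: "norm (a *\<^sub>R (\<Sum>k<K. snd (st c k)) - us)^2 \<le> (\<Sum>k<K. a * (kap * Phi (st c k)))" .
  have "norm (gradF g xb - gradF g xs)^2 + norm (a *\<^sub>R (\<Sum>k<K. snd (st c k)) - us)^2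
      \<le> 2 * L * (\<Sum>k<K. a * (Phi (st c k) / c1)) + (\<Sum>k<K. a * (kap * Phi (st c k)))"
    using n1 n2 n3 L by (smt (verit) mult_left_mono)
  also have "\<dots> = (2 * L / c1 + kap) * a * (\<Sum>k<K. Phi (st c k))"
    by (simp add: sum_distrib_left algebra_simps sum.distrib)
  finally show ?thesis unfolding xb_def a_def by simp
qed

end

theorem theorem1:
  fixes f :: "'n::finite \<Rightarrow> 'v::euclidean_space \<Rightarrow> real"
    and g :: "'n \<Rightarrow> 'v \<Rightarrow> 'v"
    and r :: "'v \<Rightarrow> ereal"
    and mu L alpha p :: real
    and W A B S :: "real^'n^'n"
    and E :: "'n \<Rightarrow> 'n \<Rightarrow> bool"
    and x0 xs ws us :: "'v^'n"
    and M :: "'w measure"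
    and theta :: "nat \<Rightarrow> 'w \<Rightarrow> bool"
  defines "xk \<equiv> (\<lambda>k \<omega>. fst (flexatc A S alpha p g r x0 (\<lambda>j. theta j \<omega>) k))"
    and "uk \<equiv> (\<lambda>k \<omega>. snd (flexatc A S alpha p g r x0 (\<lambda>j. theta j \<omega>) k))"
  assumes mu: "0 \<le> mu" and L: "0 < L"
    and f_cvx: "\<forall>i. strongly_convex mu (f i)"
    and f_smooth: "\<forall>i. smooth L (f i) (g i)"
    and r_proper: "ext_proper r" and r_closed: "ext_closed r" and r_convex: "ext_convex r"
    and W_sym: "transpose W = W"
    and W_stoch: "W *v vec 1 = vec 1"
    and E_sym: "\<forall>i j. E i j \<longrightarrow> E j i"
    and E_irrefl: "\<forall>i. \<not> E i i"
    and E_conn: "\<forall>i j. E\<^sup>*\<^sup>* i j"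
    and W_edge: "\<forall>i j. E i j \<longrightarrow> W $ i $ j > 0"
    and W_nonedge: "\<forall>i j. i \<noteq> j \<and> \<not> E i j \<longrightarrow> W $ i $ j = 0"
    and A_poly: "is_poly_in A W" and B_poly: "is_poly_in B W"
    and A_sym: "transpose A = A"
    and A_stoch: "A *v vec 1 = vec 1"
    and B_psd: "psd B"
    and B_null: "{v. B *v v = 0} = span {vec 1}"
    and IAB_psd: "psd (mat 1 - A ** A - B)"
    and S_sqrt: "transpose S = S \<and> psd S \<and> S ** S = B"
    and alpha: "0 < alpha \<and> alpha < 2 / L"
    and p: "0 < p \<and> p \<le> 1"
    and fix_w: "ws = xs - alpha *\<^sub>R gradF g xs"
    and fix_x: "xs = proxR alpha r (kron A (ws - kron S us))"
    and fix_u: "0 = kron S (ws - kron S us)"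
    and us_range: "us \<in> range (kron S)"
    and M_prob: "prob_space M"
    and theta_indep: "prob_space.indep_vars M (\<lambda>_. count_space UNIV) theta UNIV"
    and theta_distr: "\<forall>k. distr M (count_space UNIV) (theta k) = measure_pmf (bernoulli_pmf p)"
  shows
    "(AE \<omega> in M. (\<lambda>k. norm (gradF g (xk k \<omega>) - gradF g xs)^2) \<longlonglongrightarrow> 0)
     \<and> (AE \<omega> in M. (\<lambda>k. norm (uk k \<omega> - us)^2) \<longlonglongrightarrow> 0)
     \<and> (\<forall>k. integrable M (\<lambda>\<omega>. norm (gradF g (xk k \<omega>) - gradF g xs)^2))
     \<and> (\<forall>k. integrable M (\<lambda>\<omega>. norm (uk k \<omega> - us)^2))
     \<and> (\<lambda>k. LINT \<omega>|M. norm (gradF g (xk k \<omega>) - gradF g xs)^2) \<longlonglongrightarrow> 0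
     \<and> (\<lambda>k. LINT \<omega>|M. norm (uk k \<omega> - us)^2) \<longlonglongrightarrow> 0
     \<and> (\<exists>C. \<forall>K::nat. K \<ge> 1 \<longrightarrow>
          integrable M (\<lambda>\<omega>. norm (gradF g ((1 / real K) *\<^sub>R (\<Sum>k<K. xk k \<omega>)) - gradF g xs)^2
                              + norm ((1 / real K) *\<^sub>R (\<Sum>k<K. uk k \<omega>) - us)^2)
          \<and> (LINT \<omega>|M. norm (gradF g ((1 / real K) *\<^sub>R (\<Sum>k<K. xk k \<omega>)) - gradF g xs)^2
                        + norm ((1 / real K) *\<^sub>R (\<Sum>k<K. uk k \<omega>) - us)^2) \<le> C / real K)"
proof -
  have fl: "flex f g r mu L alpha p A B S xs ws us"
    using mu L f_cvx f_smooth r_proper r_closed r_convex A_sym A_stoch B_null IAB_psd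
        S_sqrt alpha p fix_w fix_x fix_u us_range unfolding flex_def by blast
  have co: "coins M theta p"
  proof (rule coins.intro[OF M_prob])
    show "coins_axioms M theta p"
      using theta_indep theta_distr p unfolding coins_axioms_def by auto
  qed
  interpret main f g r mu L alpha p A B S xs ws us M theta x0
    by (rule main.intro[OF fl co])
  obtain kap where kap: "kap > 0" "\<forall>c k. norm (snd (st c k) - us)^2 \<le> kap * Phi (st c k)"
    using u_bound by blast
  have xk_eq: "xk k \<omega> = fst (st (cv theta K \<omega>) k)" if "k \<le> K" for k K \<omega>
    unfolding xk_def using st_cv[OF that] by simp
  have uk_eq: "uk k \<omega> = snd (st (cv theta K \<omega>) k)" if "k \<le> K" for k K \<omega>
    unfolding uk_def using st_cv[OF that] by simp
  define Ph where "Ph k \<omega> = Phi (st (cv theta k \<omega>) k)" for k \<omega>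
  have Ph0: "0 \<le> Ph k \<omega>" for k \<omega> unfolding Ph_def by (rule Phi_nonneg)
  have gb: "norm (gradF g (xk k \<omega>) - gradF g xs)^2 \<le> Ph k \<omega> / c0" for k \<omega>
    unfolding xk_eq[OF order_refl] Ph_def by (rule g_bound)
  have ub: "norm (uk k \<omega> - us)^2 \<le> kap * Ph k \<omega>" for k \<omega>
    unfolding uk_eq[OF order_refl] Ph_def using kap by blast
  have int_g: "integrable M (\<lambda>\<omega>. norm (gradF g (xk k \<omega>) - gradF g xs)^2)" for k
    unfolding xk_eq[OF order_refl] by (rule cv_int[of "\<lambda>c. norm (gradF g (fst (st c k)) - gradF g xs)^2"])
  have int_u: "integrable M (\<lambda>\<omega>. norm (uk k \<omega> - us)^2)" for k
    unfolding uk_eq[OF order_refl] by (rule cv_int[of "\<lambda>c. norm (snd (st c k) - us)^2"])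
  have int_Ph: "integrable M (Ph k)" for k
    unfolding Ph_def by (rule cv_int[of "\<lambda>c. Phi (st c k)"])
  have ePk: "eP k = (\<integral>\<omega>. Ph k \<omega> \<partial>M)" for k unfolding eP_def Ph_def ..
  have ePc0: "(\<lambda>k. eP k / c0) \<longlonglongrightarrow> 0" using tendsto_divide[OF eP_tendsto tendsto_const, of c0] c_pos by simp
  have ePkap: "(\<lambda>k. kap * eP k) \<longlonglongrightarrow> 0" using tendsto_mult[OF tendsto_const eP_tendsto, of kap] by simp
  have c1: "AE \<omega> in M. (\<lambda>k. norm (gradF g (xk k \<omega>) - gradF g xs)^2) \<longlonglongrightarrow> 0"
    using ae_phi
  proof (rule AE_mp, intro AE_I2 impI)
    fix \<omega> assume "(\<lambda>k. Phi (st (cv theta k \<omega>) k)) \<longlonglongrightarrow> 0"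
    then have lim: "(\<lambda>k. Ph k \<omega> / c0) \<longlonglongrightarrow> 0" unfolding Ph_def using tendsto_divide[OF _ tendsto_const, of _ 0 sequentially c0] c_pos by simp
    show "(\<lambda>k. norm (gradF g (xk k \<omega>) - gradF g xs)^2) \<longlonglongrightarrow> 0"
    proof (rule tendsto_sandwich[OF _ _ tendsto_const lim])
      show "\<forall>\<^sub>F k in sequentially. 0 \<le> norm (gradF g (xk k \<omega>) - gradF g xs)^2" by simp
      show "\<forall>\<^sub>F k in sequentially. norm (gradF g (xk k \<omega>) - gradF g xs)^2 \<le> Ph k \<omega> / c0"
        by (intro always_eventually allI gb)
    qed
  qed
  have c2: "AE \<omega> in M. (\<lambda>k. norm (uk k \<omega> - us)^2) \<longlonglongrightarrow> 0"
    using ae_phi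
  proof (rule AE_mp, intro AE_I2 impI)
    fix \<omega> assume "(\<lambda>k. Phi (st (cv theta k \<omega>) k)) \<longlonglongrightarrow> 0"
    then have lim: "(\<lambda>k. kap * Ph k \<omega>) \<longlonglongrightarrow> 0" unfolding Ph_def using tendsto_mult[OF tendsto_const, of _ 0 sequentially kap] by simp
    show "(\<lambda>k. norm (uk k \<omega> - us)^2) \<longlonglongrightarrow> 0"
    proof (rule tendsto_sandwich[OF _ _ tendsto_const lim])
      show "\<forall>\<^sub>F k in sequentially. 0 \<le> norm (uk k \<omega> - us)^2" by simp
      show "\<forall>\<^sub>F k in sequentially. norm (uk k \<omega> - us)^2 \<le> kap * Ph k \<omega>"
        by (intro always_eventually allI ub)
    qed
  qed
  have c5: "(\<lambda>k. LINT \<omega>|M. norm (gradF g (xk k \<omega>) - gradF g xs)^2) \<longlonglongrightarrow> 0"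
  proof (rule tendsto_sandwich[OF _ _ tendsto_const ePc0])
    show "\<forall>\<^sub>F k in sequentially. 0 \<le> (LINT \<omega>|M. norm (gradF g (xk k \<omega>) - gradF g xs)^2)"
      by (intro always_eventually allI integral_nonneg_AE) auto
    show "\<forall>\<^sub>F k in sequentially. (LINT \<omega>|M. norm (gradF g (xk k \<omega>) - gradF g xs)^2) \<le> eP k / c0"
    proof (intro always_eventually allI)
      fix k
      have "(LINT \<omega>|M. norm (gradF g (xk k \<omega>) - gradF g xs)^2) \<le> (LINT \<omega>|M. Ph k \<omega> / c0)"
        by (intro integral_mono int_g) (auto intro: gb int_Ph)
      then show "(LINT \<omega>|M. norm (gradF g (xk k \<omega>) - gradF g xs)^2) \<le> eP k / c0" unfolding ePk by simp
    qed
  qed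
  have c6: "(\<lambda>k. LINT \<omega>|M. norm (uk k \<omega> - us)^2) \<longlonglongrightarrow> 0"
  proof (rule tendsto_sandwich[OF _ _ tendsto_const ePkap])
    show "\<forall>\<^sub>F k in sequentially. 0 \<le> (LINT \<omega>|M. norm (uk k \<omega> - us)^2)"
      by (intro always_eventually allI integral_nonneg_AE) auto
    show "\<forall>\<^sub>F k in sequentially. (LINT \<omega>|M. norm (uk k \<omega> - us)^2) \<le> kap * eP k"
    proof (intro always_eventually allI)
      fix k
      have "(LINT \<omega>|M. norm (uk k \<omega> - us)^2) \<le> (LINT \<omega>|M. kap * Ph k \<omega>)"
        by (intro integral_mono int_u) (auto intro: ub int_Ph)
      then show "(LINT \<omega>|M. norm (uk k \<omega> - us)^2) \<le> kap * eP k" unfolding ePk by simp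
    qed
  qed
  define C where "C = (2 * L / c1 + kap) * V (x0, 0)"
  have c7: "integrable M (\<lambda>\<omega>. norm (gradF g ((1 / real K) *\<^sub>R (\<Sum>k<K. xk k \<omega>)) - gradF g xs)^2
                              + norm ((1 / real K) *\<^sub>R (\<Sum>k<K. uk k \<omega>) - us)^2)
          \<and> (LINT \<omega>|M. norm (gradF g ((1 / real K) *\<^sub>R (\<Sum>k<K. xk k \<omega>)) - gradF g xs)^2
                        + norm ((1 / real K) *\<^sub>R (\<Sum>k<K. uk k \<omega>) - us)^2) \<le> C / real K"
    if K: "K \<ge> 1" for K
  proof -
    define H where "H c = norm (gradF g ((1 / real K) *\<^sub>R (\<Sum>k<K. fst (st c k))) - gradF g xs)^2
         + norm ((1 / real K) *\<^sub>R (\<Sum>k<K. snd (st c k)) - us)^2" for c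
    have Heq: "(\<lambda>\<omega>. norm (gradF g ((1 / real K) *\<^sub>R (\<Sum>k<K. xk k \<omega>)) - gradF g xs)^2
                              + norm ((1 / real K) *\<^sub>R (\<Sum>k<K. uk k \<omega>) - us)^2) = (\<lambda>\<omega>. H (cv theta K \<omega>))"
    proof (rule ext)
      fix \<omega>
      have "(\<Sum>k<K. xk k \<omega>) = (\<Sum>k<K. fst (st (cv theta K \<omega>) k))" by (intro sum.cong refl xk_eq) auto
      moreover have "(\<Sum>k<K. uk k \<omega>) = (\<Sum>k<K. snd (st (cv theta K \<omega>) k))" by (intro sum.cong refl uk_eq) auto
      ultimately show "norm (gradF g ((1 / real K) *\<^sub>R (\<Sum>k<K. xk k \<omega>)) - gradF g xs)^2
                              + norm ((1 / real K) *\<^sub>R (\<Sum>k<K. uk k \<omega>) - us)^2 = H (cv theta K \<omega>)"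
        unfolding H_def by simp
    qed
    have intH: "integrable M (\<lambda>\<omega>. H (cv theta K \<omega>))" by (rule cv_int)
    have PhK: "Phi (st (cv theta K \<omega>) k) = Ph k \<omega>" if "k < K" for k \<omega>
    proof -
      have "st (cv theta K \<omega>) k = st (cv theta k \<omega>) k"
        using st_cv[of k K \<omega>] st_cv[of k k \<omega>] that by simp
      then show ?thesis unfolding Ph_def by simp
    qed
    have "(LINT \<omega>|M. H (cv theta K \<omega>)) \<le> (LINT \<omega>|M. (2 * L / c1 + kap) / real K * (\<Sum>k<K. Ph k \<omega>))"
    proof (rule integral_mono[OF intH])
      show "integrable M (\<lambda>\<omega>. (2 * L / c1 + kap) / real K * (\<Sum>k<K. Ph k \<omega>))"
        using int_Ph by auto
      fix \<omega>
      have "H (cv theta K \<omega>) \<le> (2 * L / c1 + kap) / real K * (\<Sum>k<K. Phi (st (cv theta K \<omega>) k))"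
        unfolding H_def by (rule erg_pt[OF K kap(2)])
      also have "(\<Sum>k<K. Phi (st (cv theta K \<omega>) k)) = (\<Sum>k<K. Ph k \<omega>)" by (intro sum.cong refl PhK) auto
      finally show "H (cv theta K \<omega>) \<le> (2 * L / c1 + kap) / real K * (\<Sum>k<K. Ph k \<omega>)" .
    qed
    also have "\<dots> = (2 * L / c1 + kap) / real K * (\<Sum>k<K. eP k)"
      using int_Ph by (simp add: ePk)
    also have "\<dots> \<le> (2 * L / c1 + kap) / real K * V (x0, 0)"
      using eP_sum c_pos kap L by (intro mult_left_mono) auto
    also have "\<dots> = C / real K" unfolding C_def by simp
    finally show ?thesis unfolding Heq using intH by simp
  qed
  show ?thesis using c1 c2 int_g int_u c5 c6 c7 by blast
qed


end
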